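(* For integers $d\ge 2$ and $n> d$, $$a_{n,d}=\sum_{r_1=0}^{n_1-1}\sum_{c_1=0}^{r_1}\cdots \sum_{r_{d}=0}^{n_{d}-1}\sum_{c_{d}=0}^{r_{d}} (-1)^{r}\, 2^{c}\, (n-r-c)! \prod_{k=1}^{d}\binom{n_k-r_k}{c_k} \sum_{\substack{l_{1,1}+\cdots+l_{c_1,1}=r_1\\ l_{i,1}\ge 1}}\cdots \sum_{\substack{l_{1,d}+\cdots+l_{c_d,d}=r_d\\ l_{i,d}\ge 1}} q_{n,d}(L),$$ where $r=\sum_{k=1}^d r_k$, $c=\sum_{k=1}^d c_k$, $L=[l_1,\dots,l_c]$ is the concatenation of the lists $(l_{1,1},\dots,l_{c_1,1}),\dots,(l_{1,d},\dots,l_{c_d,d})$, and $$q_{n,d}([l_1,\dots,l_c])=\sum_{\substack{J_1\sqcup\cdots\sqcup J_d=\{1,\dots,c\}\\ n_k\ge \sum_{i\in J_k} l_i \ \forall k}}\ \prod_{k=1}^{d}\binom{n_k-\sum_{i\in J_k}l_i}{|J_k|}\,|J_k|!\,,$$ the sum running over all ordered tuples $(J_1,\dots,J_d)$ of pairwise disjoint (possibly empty) sets whose union is $\{1,\dots,c\}$.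
   Context: For $d\ge 1$ and $n\ge 1$, $a_{n,d}$ denotes the number of permutations $\pi$ of $\{1,\dots,n\}$ such that $|\pi(i+d)-\pi(i)|\neq d$ for all $1\le i\le n-d$. For $k=1,\dots,d$, $n_k=|\{1\le i\le n : i\equiv k \pmod d\}|$. A sum over compositions $l_{1,k}+\cdots+l_{c_k,k}=r_k$ with all $l_{i,k}\ge1$ is empty (contributes $0$) if there are no such compositions, and when $c_k=r_k=0$ it consists of the single empty composition. *)

theory Defs
  imports Main "HOL-Combinatorics.Permutations"
begin

definition a_seq :: "nat \<Rightarrow> nat \<Rightarrow> nat" where
  "a_seq n d = card {\<pi>. \<pi> permutes {1..n} \<and>
      (\<forall>i. 1 \<le> i \<and> i + d \<le> n \<longrightarrow> \<bar>int (\<pi> (i + d)) - int (\<pi> i)\<bar> \<noteq> int d)}"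

definition nk :: "nat \<Rightarrow> nat \<Rightarrow> nat \<Rightarrow> nat" where
  "nk n d k = card {i \<in> {1..n}. i mod d = k mod d}"

definition compositions :: "nat \<Rightarrow> nat \<Rightarrow> nat list set" where
  "compositions r c = {l. length l = c \<and> (\<forall>x\<in>set l. 1 \<le> x) \<and> sum_list l = r}"

text \<open>q_{n,d}([l_1,...,l_c]); list L is 1-indexed via L ! (i - 1).\<close>
definition q_nd :: "nat \<Rightarrow> nat \<Rightarrow> nat list \<Rightarrow> nat" where
  "q_nd n d L = (\<Sum>J \<in> {J \<in> PiE {1..d} (\<lambda>k. Pow {1..length L}).
        (\<forall>k\<in>{1..d}. \<forall>k'\<in>{1..d}. k \<noteq> k' \<longrightarrow> J k \<inter> J k' = {}) \<and>
        (\<Union>k\<in>{1..d}. J k) = {1..length L} \<and>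
        (\<forall>k\<in>{1..d}. (\<Sum>i\<in>J k. L ! (i - 1)) \<le> nk n d k)}.
      \<Prod>k=1..d. ((nk n d k - (\<Sum>i\<in>J k. L ! (i - 1))) choose card (J k)) * fact (card (J k)))"

end

theory Submission
  imports Defs
begin

lemma alt_sum_Pow:
  assumes "finite B"
  shows "(\<Sum>S\<in>Pow B. (-1::int) ^ card S) = (if B = {} then 1 else 0)"
  using assms
proof (induction B rule: finite_induct)
  case empty then show ?case by simp
next
  case (insert a B)
  have "Pow (insert a B) = Pow B \<union> insert a ` Pow B" by (simp add: Pow_insert)
  moreover have "Pow B \<inter> insert a ` Pow B = {}" using insert by auto
  moreover have "inj_on (insert a) (Pow B)" using insert by (auto simp: inj_on_def)
  ultimately have "(\<Sum>S\<in>Pow (insert a B). (-1::int) ^ card S) =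
      (\<Sum>S\<in>Pow B. (-1::int) ^ card S) + (\<Sum>S\<in>Pow B. (-1::int) ^ card (insert a S))"
    using insert by (simp add: sum.union_disjoint sum.reindex)
  also have "(\<Sum>S\<in>Pow B. (-1::int) ^ card (insert a S)) = - (\<Sum>S\<in>Pow B. (-1::int) ^ card S)"
    by (simp add: sum_negf[symmetric], intro sum.cong refl)
       (use insert in \<open>auto simp: card_insert_if finite_subset\<close>; metis finite_subset)
  finally show ?case by simp
qed

lemma card_perm_extend:
  assumes U: "finite U" and GU1: "fst ` G \<subseteq> U" and GU2: "snd ` G \<subseteq> U"
    and inj: "\<And>a b a' b'. (a,b)\<in>G \<Longrightarrow> (a',b')\<in>G \<Longrightarrow> (a = a') = (b = b')"
  shows "card {\<pi>. \<pi> permutes U \<and> (\<forall>(a,b)\<in>G. \<pi> a = b)} = fact (card U - card G)"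
proof -
  define D where "D = fst ` G"
  define R where "R = snd ` G"
  define g where "g a = (THE b. (a,b) \<in> G)" for a
  have finG: "finite G"
    by (rule finite_subset[of _ "U \<times> U"]) (use GU1 GU2 U in force)+
  have gG: "(a, g a) \<in> G" if aD: "a \<in> D" for a
  proof -
    obtain b where b: "(a,b) \<in> G" using aD unfolding D_def by force
    have "g a = b" unfolding g_def using b inj by (intro the_equality) auto
    with b show ?thesis by simp
  qed
  have gval: "g a = b" if "(a,b) \<in> G" for a b
    using gG[of a] that inj D_def by force
  have injfst: "inj_on fst G" using inj by (auto simp: inj_on_def)
  have injsnd: "inj_on snd G" using inj by (auto simp: inj_on_def)
  have cD: "card D = card G" unfolding D_def using card_image[OF injfst] .
  have cR: "card R = card G" unfolding R_def using card_image[OF injsnd] .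
  have DU: "D \<subseteq> U" "R \<subseteq> U" using GU1 GU2 D_def R_def by auto
  have "card (U - D) = card (U - R)"
    using cD cR DU U by (simp add: card_Diff_subset finite_subset)
  then obtain h0 where h0: "bij_betw h0 (U - D) (U - R)"
    using finite_same_card_bij U by blast
  define h where "h x = (if x \<in> D then g x else if x \<in> U then h0 x else x)" for x
  have b1: "bij_betw h D R"
  proof -
    have "bij_betw g D R"
      unfolding bij_betw_def inj_on_def
    proof (intro conjI ballI impI)
      fix x y assume "x \<in> D" "y \<in> D" "g x = g y"
      then show "x = y" using gG[of x] gG[of y] inj by metis
    next
      show "g ` D = R"
      proof
        show "g ` D \<subseteq> R" using gG R_def by force
        show "R \<subseteq> g ` D"
        proof
          fix b assume "b \<in> R"
          then obtain a where "(a,b) \<in> G" using R_def by auto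
          then show "b \<in> g ` D" using gval D_def by force
        qed
      qed
    qed
    then show ?thesis by (rule bij_betw_cong[THEN iffD1, rotated]) (simp add: h_def)
  qed
  have b2: "bij_betw h (U - D) (U - R)"
    using h0 by (rule bij_betw_cong[THEN iffD1, rotated]) (simp add: h_def)
  have "bij_betw h (D \<union> (U - D)) (R \<union> (U - R))"
    by (rule bij_betw_combine[OF b1 b2]) auto
  then have bh: "bij_betw h U U" using DU by (simp add: Un_absorb1 Un_Diff_cancel)
  have hp: "h permutes U" by (rule bij_imp_permutes[OF bh]) (use DU in \<open>auto simp: h_def\<close>)
  have eq: "{\<pi>. \<pi> permutes U \<and> (\<forall>(a,b)\<in>G. \<pi> a = b)} = (\<lambda>\<tau>. h \<circ> \<tau>) ` {\<tau>. \<tau> permutes (U - D)}"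
  proof (intro equalityI subsetI)
    fix \<pi> assume "\<pi> \<in> {\<pi>. \<pi> permutes U \<and> (\<forall>(a,b)\<in>G. \<pi> a = b)}"
    then have p: "\<pi> permutes U" and pa: "\<forall>(a,b)\<in>G. \<pi> a = b" by auto
    define \<tau> where "\<tau> = inv h \<circ> \<pi>"
    have tp: "\<tau> permutes U" unfolding \<tau>_def by (intro permutes_compose p permutes_inv hp)
    have "\<tau> x = x" if "x \<in> D" for x
    proof -
      have "\<pi> x = g x" using pa gG[OF that] by auto
      also have "\<dots> = h x" using that by (simp add: h_def)
      finally show ?thesis unfolding \<tau>_def using permutes_inverses(2)[OF hp] by simp
    qed
    then have "\<tau> permutes (U - D)" using tp unfolding permutes_def by auto
    moreover have "\<pi> = h \<circ> \<tau>" unfolding \<tau>_def using permutes_inverses(1)[OF hp] by (auto simp: fun_eq_iff)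
    ultimately show "\<pi> \<in> (\<lambda>\<tau>. h \<circ> \<tau>) ` {\<tau>. \<tau> permutes (U - D)}" by auto
  next
    fix \<pi> assume "\<pi> \<in> (\<lambda>\<tau>. h \<circ> \<tau>) ` {\<tau>. \<tau> permutes (U - D)}"
    then obtain \<tau> where t: "\<tau> permutes (U - D)" and pi: "\<pi> = h \<circ> \<tau>" by auto
    have "\<tau> permutes U" using t permutes_subset by blast
    then have "\<pi> permutes U" using pi hp permutes_compose by blast
    moreover have "\<forall>(a,b)\<in>G. \<pi> a = b"
    proof (intro ballI, clarify)
      fix a b assume ab: "(a,b) \<in> G"
      then have aD: "a \<in> D" using D_def by force
      then have "\<tau> a = a" using t permutes_not_in by fastforce
      then show "\<pi> a = b" using pi aD gval[OF ab] by (simp add: h_def)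
    qed
    ultimately show "\<pi> \<in> {\<pi>. \<pi> permutes U \<and> (\<forall>(a,b)\<in>G. \<pi> a = b)}" by auto
  qed
  have "inj_on (\<lambda>\<tau>. h \<circ> \<tau>) {\<tau>. \<tau> permutes (U - D)}"
  proof (rule inj_onI)
    fix x y assume "h \<circ> x = h \<circ> y"
    then have "inv h \<circ> (h \<circ> x) = inv h \<circ> (h \<circ> y)" by simp
    then show "x = y" using permutes_inv_o(2)[OF hp] by (metis comp_assoc comp_id id_comp)
  qed
  then have "card {\<pi>. \<pi> permutes U \<and> (\<forall>(a,b)\<in>G. \<pi> a = b)} = card {\<tau>. \<tau> permutes (U - D)}"
    by (simp add: eq card_image)
  also have "\<dots> = fact (card (U - D))" using U by (intro card_permutations) auto
  also have "card (U - D) = card U - card G" using cD DU U by (simp add: card_Diff_subset finite_subset)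
  finally show ?thesis .
qed

lemma card_perm_extend_noninj:
  assumes "(a,b)\<in>G" "(a',b')\<in>G" "(a = a') \<noteq> (b = b')"
  shows "{\<pi>. \<pi> permutes U \<and> (\<forall>(a,b)\<in>G. \<pi> a = b)} = {}"
proof -
  { fix \<pi> assume "\<pi> permutes U" "\<forall>(a,b)\<in>G. \<pi> a = b"
    then have "\<pi> a = b" "\<pi> a' = b'" "inj \<pi>" using assms permutes_inj by fastforce+
    then have False using assms by (auto dest: injD) }
  then show ?thesis by blast
qed

definition plc :: "nat \<Rightarrow> 'i set \<Rightarrow> ('i \<Rightarrow> nat) \<Rightarrow> ('i \<Rightarrow> nat) set" where
  "plc m J l = {y \<in> PiE J (\<lambda>i. {y. y + l i < m}).
     \<forall>i\<in>J. \<forall>j\<in>J. i \<noteq> j \<longrightarrow> {y i..y i + l i} \<inter> {y j..y j + l j} = {}}"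

lemma finite_lt_set: "finite {y::nat. y + k < m}"
  by (rule finite_subset[of _ "{..<m}"]) auto

lemma finite_plc: "finite J \<Longrightarrow> finite (plc m J l)"
  unfolding plc_def by (rule finite_subset[of _ "PiE J (\<lambda>i. {y. y + l i < m})"])
    (auto intro!: finite_PiE finite_lt_set)

lemma plc_0: "finite J \<Longrightarrow> card (plc 0 J l) = (if J = {} then 1 else 0)"
  unfolding plc_def by (auto simp: PiE_eq_empty_iff)

lemma plc_Suc_split:
  "plc (Suc m) J l = plc m J l \<union> (\<Union>i\<in>J. {y \<in> plc (Suc m) J l. y i + l i = m})"
  unfolding plc_def by (auto simp: PiE_iff) (metis less_Suc_eq)

lemma plc_A_card:
  assumes J: "finite J" and i: "i \<in> J"
  shows "card {y \<in> plc (Suc m) J l. y i + l i = m} =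
         (if l i \<le> m then card (plc (m - l i) (J - {i}) l) else 0)"
proof (cases "l i \<le> m")
  case False
  then have "{y \<in> plc (Suc m) J l. y i + l i = m} = {}" by auto
  then show ?thesis using False by simp
next
  case True
  have "bij_betw (\<lambda>y. restrict y (J - {i})) {y \<in> plc (Suc m) J l. y i + l i = m}
          (plc (m - l i) (J - {i}) l)"
  proof (rule bij_betw_byWitness[where f' = "\<lambda>z. z(i := m - l i)"])
    show "\<forall>a\<in>{y \<in> plc (Suc m) J l. y i + l i = m}. (restrict a (J - {i}))(i := m - l i) = a"
      using i by (auto simp: plc_def PiE_iff fun_eq_iff extensional_def)
    show "\<forall>a'\<in>plc (m - l i) (J - {i}) l. restrict (a'(i := m - l i)) (J - {i}) = a'"
      by (auto simp: plc_def PiE_iff fun_eq_iff extensional_def)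
    show "(\<lambda>y. restrict y (J - {i})) ` {y \<in> plc (Suc m) J l. y i + l i = m} \<subseteq> plc (m - l i) (J - {i}) l"
    proof (rule image_subsetI)
      fix y assume "y \<in> {y \<in> plc (Suc m) J l. y i + l i = m}"
      then have y: "y \<in> plc (Suc m) J l" "y i + l i = m" by auto
      have lt: "y j + l j < m - l i" if j: "j \<in> J" "j \<noteq> i" for j
      proof (rule ccontr)
        assume "\<not> y j + l j < m - l i"
        moreover have "y j + l j \<le> m" using y j by (auto simp: plc_def PiE_iff less_Suc_eq_le)
        ultimately have "y j + l j \<in> {y i..y i + l i} \<inter> {y j..y j + l j}" using y by auto
        then show False using y j i unfolding plc_def by blast
      qed
      show "restrict y (J - {i}) \<in> plc (m - l i) (J - {i}) l"
        using y lt unfolding plc_def by auto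
    qed
    show "(\<lambda>z. z(i := m - l i)) ` plc (m - l i) (J - {i}) l \<subseteq> {y \<in> plc (Suc m) J l. y i + l i = m}"
    proof (rule image_subsetI)
      fix z assume z: "z \<in> plc (m - l i) (J - {i}) l"
      have zi: "z j + l j < m - l i" if "j \<in> J - {i}" for j using z that by (auto simp: plc_def)
      have "z(i := m - l i) \<in> plc (Suc m) J l \<and> (z(i := m - l i)) i + l i = m"
      proof -
        have "z \<in> PiE (J - {i}) (\<lambda>j. {y. y + l j < m - l i})" using z by (auto simp: plc_def)
        then have "z(i := m - l i) \<in> PiE J (\<lambda>j. {y. y + l j < Suc m})"
          using i True by (force simp: PiE_iff extensional_def)
        moreover have "\<forall>a\<in>J. \<forall>b\<in>J. a \<noteq> b \<longrightarrow> {(z(i := m - l i)) a..(z(i := m - l i)) a + l a} \<inter>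
            {(z(i := m - l i)) b..(z(i := m - l i)) b + l b} = {}"
        proof (intro ballI impI)
          fix a b assume ab: "a \<in> J" "b \<in> J" "a \<noteq> b"
          show "{(z(i := m - l i)) a..(z(i := m - l i)) a + l a} \<inter>
            {(z(i := m - l i)) b..(z(i := m - l i)) b + l b} = {}"
          proof (cases "a = i")
            case True then show ?thesis using zi[of b] ab by auto
          next
            case F: False
            show ?thesis
            proof (cases "b = i")
              case True then show ?thesis using zi[of a] ab F by auto
            next
              case False then show ?thesis using z ab F by (auto simp: plc_def)
            qed
          qed
        qed
        ultimately have "z(i := m - l i) \<in> plc (Suc m) J l" unfolding plc_def by blast
        then show ?thesis using True by simp
      qed
      then show "z(i := m - l i) \<in> {y \<in> plc (Suc m) J l. y i + l i = m}" by simp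
    qed
  qed
  then show ?thesis using True by (simp add: bij_betw_same_card)
qed

lemma plc_arith:
  fixes j s m :: nat
  assumes "finite J" "card J = j" "sum l J = s"
  shows "((m - s) choose j) * fact j +
     (\<Sum>i\<in>J. if l i \<le> m then ((m - l i - (s - l i)) choose (j - 1)) * fact (j - 1) else 0)
     = ((Suc m - s) choose j) * fact j"
proof (cases "j = 0")
  case True
  then have "J = {}" using assms by simp
  then show ?thesis using assms True by simp
next
  case False
  then obtain j' where j': "j = Suc j'" using not0_implies_Suc by blast
  have lis: "l i \<le> s" if "i \<in> J" for i
    using assms that by (metis member_le_sum zero_le)
  show ?thesis
  proof (cases "s \<le> m")
    case True
    have "(\<Sum>i\<in>J. if l i \<le> m then ((m - l i - (s - l i)) choose (j - 1)) * fact (j - 1) else 0)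
        = (\<Sum>i\<in>J. ((m - s) choose j') * fact j')"
    proof (intro sum.cong refl)
      fix i assume "i \<in> J"
      then have "l i \<le> m" "l i \<le> s" using lis True by (meson le_trans)+
      then show "(if l i \<le> m then ((m - l i - (s - l i)) choose (j - 1)) * fact (j - 1) else 0) = ((m - s) choose j') * fact j'"
        using j' by simp
    qed
    also have "\<dots> = j * (((m - s) choose j') * fact j')" using assms by simp
    finally have e: "(\<Sum>i\<in>J. if l i \<le> m then ((m - l i - (s - l i)) choose (j - 1)) * fact (j - 1) else 0)
        = j * (((m - s) choose j') * fact j')" .
    have "Suc m - s = Suc (m - s)" using True by simp
    then show ?thesis unfolding e using j'
      by (simp add: algebra_simps)
  next
    case False
    have "(\<Sum>i\<in>J. if l i \<le> m then ((m - l i - (s - l i)) choose (j - 1)) * fact (j - 1) else 0) = 0"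
    proof (intro sum.neutral ballI)
      fix i assume i: "i \<in> J"
      show "(if l i \<le> m then ((m - l i - (s - l i)) choose (j - 1)) * fact (j - 1) else 0) = 0"
      proof (cases "l i \<le> m")
        case True
        have "j \<noteq> 1"
        proof
          assume "j = 1"
          then obtain x where "J = {x}" using assms card_1_singletonE by metis
          then show False using i True False assms by auto
        qed
        then have "j - 1 > 0" using j' by simp
        moreover have "m - l i - (s - l i) = 0" using False by simp
        ultimately show ?thesis by simp
      qed simp
    qed
    then show ?thesis using False j' by simp
  qed
qed

lemma card_plc:
  assumes "finite J"
  shows "card (plc m J l) = ((m - sum l J) choose card J) * fact (card J)"
  using assms
proof (induction m arbitrary: J rule: less_induct)
  case (less m0)
  show ?case
  proof (cases m0)
    case 0
    then show ?thesis using less.prems by (simp add: plc_0 card_gt_0_iff)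
  next
    case (Suc m)
  let ?A = "\<lambda>i. {y \<in> plc (Suc m) J l. y i + l i = m}"
  have fin: "finite (plc (Suc m) J l)" using less.prems finite_plc by blast
  have d1: "plc m J l \<inter> (\<Union>i\<in>J. ?A i) = {}" by (auto simp: plc_def PiE_iff)
  have d2: "\<forall>i\<in>J. \<forall>j\<in>J. i \<noteq> j \<longrightarrow> ?A i \<inter> ?A j = {}"
  proof (intro ballI impI)
    fix i j assume ij: "i \<in> J" "j \<in> J" "i \<noteq> j"
    { fix y assume "y \<in> ?A i" "y \<in> ?A j"
      then have "m \<in> {y i..y i + l i} \<inter> {y j..y j + l j}" by auto
      then have False using ij \<open>y \<in> ?A i\<close> unfolding plc_def by blast }
    then show "?A i \<inter> ?A j = {}" by blast
  qed
  have IH: "card (plc k K l) = ((k - sum l K) choose card K) * fact (card K)" if "k \<le> m" "finite K" for k K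
    using less.IH[of k K] that Suc by simp
  have "card (plc (Suc m) J l) = card (plc m J l) + card (\<Union>i\<in>J. ?A i)"
    using plc_Suc_split[of m J l] d1 less.prems finite_plc fin
    by (metis (no_types, lifting) card_Un_disjoint finite_Un)
  also have "card (\<Union>i\<in>J. ?A i) = (\<Sum>i\<in>J. card (?A i))"
    using less.prems d2 fin by (intro card_UN_disjoint) auto
  also have "\<dots> = (\<Sum>i\<in>J. if l i \<le> m then ((m - l i - sum l (J - {i})) choose card (J - {i})) * fact (card (J - {i})) else 0)"
    using less.prems by (intro sum.cong refl) (simp add: plc_A_card IH)
  also have "\<dots> = (\<Sum>i\<in>J. if l i \<le> m then ((m - l i - (sum l J - l i)) choose (card J - 1)) * fact (card J - 1) else 0)"
    using less.prems by (intro sum.cong refl) (simp add: sum_diff1_nat)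
  finally show ?thesis using IH[OF le_refl less.prems] plc_arith[OF less.prems refl refl, of m l] Suc by simp
  qed
qed

fun lead :: "bool list \<Rightarrow> nat" where
  "lead [] = 0"
| "lead (b # bs) = (if b then Suc (lead bs) else 0)"

lemma lead_le: "lead bs \<le> length bs"
  by (induction bs) auto

lemma lead_split: "bs = replicate (lead bs) True @ drop (lead bs) bs"
  by (induction bs) auto

lemma drop_lead: "drop (lead bs) bs = [] \<or> drop (lead bs) bs = False # drop (Suc (lead bs)) bs"
  by (induction bs) auto

lemma lead_rep: "lead (replicate k True @ False # rest) = k" "lead (replicate k True) = k"
  by (induction k) auto

function runs :: "nat \<Rightarrow> bool list \<Rightarrow> (nat \<times> nat) list" where
  "runs i [] = []"
| "runs i (False # bs) = runs (Suc i) bs"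
| "runs i (True # bs) = (i, Suc (lead bs)) # runs (i + Suc (lead bs)) (drop (lead bs) bs)"
  by pat_completeness auto
termination by (relation "measure (\<lambda>(i,bs). length bs)") auto

function cmp :: "bool list \<Rightarrow> nat list" where
  "cmp [] = []"
| "cmp (False # bs) = cmp bs"
| "cmp (True # bs) = Suc (lead bs) # cmp (drop (lead bs) bs)"
  by pat_completeness auto
termination by (relation "measure length") auto

lemma runs_cmp: "map snd (runs i bs) = cmp bs"
  by (induction i bs rule: runs.induct) auto

lemma runs_bounds: "(x,l) \<in> set (runs i bs) \<Longrightarrow> i \<le> x \<and> 1 \<le> l \<and> x + l \<le> i + length bs"
proof (induction i bs rule: runs.induct)
  case (3 i bs)
  then show ?case using lead_le[of bs] by (auto simp: min_def split: if_splits)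
qed auto

lemma runs_sorted: "sorted_wrt (\<lambda>(x,l) (x',l'). x + l < x') (runs i bs)"
proof (induction i bs rule: runs.induct)
  case (3 i bs)
  have "i + Suc (lead bs) < x'" if "(x', l') \<in> set (runs (i + Suc (lead bs)) (drop (lead bs) bs))" for x' l'
  proof -
    from drop_lead[of bs] show ?thesis
    proof
      assume "drop (lead bs) bs = []" then show ?thesis using that by simp
    next
      assume "drop (lead bs) bs = False # drop (Suc (lead bs)) bs"
      then have "(x', l') \<in> set (runs (Suc (i + Suc (lead bs))) (drop (Suc (lead bs)) bs))" using that by simp
      then show ?thesis using runs_bounds by fastforce
    qed
  qed
  then show ?case using 3 by auto
qed auto

lemma runs_cover: "{i + j | j. j < length bs \<and> bs ! j} = (\<Union>(x,l)\<in>set (runs i bs). {x..<x+l})"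
proof (induction i bs rule: runs.induct)
  case (1 i) then show ?case by simp
next
  case (2 i bs)
  have "{i + j | j. j < length (False # bs) \<and> (False # bs) ! j} = {Suc i + j | j. j < length bs \<and> bs ! j}"
  proof (intro equalityI subsetI)
    fix z assume "z \<in> {i + j | j. j < length (False # bs) \<and> (False # bs) ! j}"
    then obtain j where j: "z = i + j" "j < length (False # bs)" "(False # bs) ! j" by blast
    then obtain j' where "j = Suc j'" by (cases j) auto
    then have "z = Suc i + j'" "j' < length bs" "bs ! j'" using j by auto
    then show "z \<in> {Suc i + j | j. j < length bs \<and> bs ! j}" by blast
  next
    fix z assume "z \<in> {Suc i + j | j. j < length bs \<and> bs ! j}"
    then obtain j where j: "z = Suc i + j" "j < length bs" "bs ! j" by blast
    then have "z = i + Suc j" "Suc j < length (False # bs)" "(False # bs) ! Suc j" by auto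
    then show "z \<in> {i + j | j. j < length (False # bs) \<and> (False # bs) ! j}" by blast
  qed
  then show ?case using 2 by simp
next
  case (3 i bs)
  let ?k = "lead bs"
  have "{i + j | j. j < length (True # bs) \<and> (True # bs) ! j} =
        {i..<i + Suc ?k} \<union> {i + Suc ?k + j | j. j < length (drop ?k bs) \<and> drop ?k bs ! j}"
  proof -
    have bs: "True # bs = replicate (Suc ?k) True @ drop ?k bs" by (metis lead_split append_Cons replicate_Suc)
    define ys where "ys = drop ?k bs"
    have "{i + j | j. j < length (replicate (Suc ?k) True @ ys) \<and> (replicate (Suc ?k) True @ ys) ! j} =
        {i..<i + Suc ?k} \<union> {i + Suc ?k + j | j. j < length ys \<and> ys ! j}"
    proof (intro equalityI subsetI)
      fix z assume "z \<in> {i + j | j. j < length (replicate (Suc ?k) True @ ys) \<and> (replicate (Suc ?k) True @ ys) ! j}"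
      then obtain j where j: "z = i + j" "j < length (replicate (Suc ?k) True @ ys)" "(replicate (Suc ?k) True @ ys) ! j" by blast
      show "z \<in> {i..<i + Suc ?k} \<union> {i + Suc ?k + j | j. j < length ys \<and> ys ! j}"
      proof (cases "j < Suc ?k")
        case True then show ?thesis using j by simp
      next
        case False
        then have "(replicate (Suc ?k) True @ ys) ! j = ys ! (j - Suc ?k)"
          by (simp add: nth_append del: replicate_Suc)
        then have "z = i + Suc ?k + (j - Suc ?k)" "j - Suc ?k < length ys" "ys ! (j - Suc ?k)"
          using j False by auto
        then show ?thesis by blast
      qed
    next
      fix z assume "z \<in> {i..<i + Suc ?k} \<union> {i + Suc ?k + j | j. j < length ys \<and> ys ! j}"
      then show "z \<in> {i + j | j. j < length (replicate (Suc ?k) True @ ys) \<and> (replicate (Suc ?k) True @ ys) ! j}"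
      proof
        assume "z \<in> {i..<i + Suc ?k}"
        then have "z = i + (z - i)" "z - i < length (replicate (Suc ?k) True @ ys)" "(replicate (Suc ?k) True @ ys) ! (z - i)"
          by (auto simp: nth_append simp del: replicate_Suc)
        then show ?thesis by blast
      next
        assume "z \<in> {i + Suc ?k + j | j. j < length ys \<and> ys ! j}"
        then obtain j where "z = i + (Suc ?k + j)" "Suc ?k + j < length (replicate (Suc ?k) True @ ys)" "(replicate (Suc ?k) True @ ys) ! (Suc ?k + j)"
          by (auto simp: nth_append)
        then show ?thesis by blast
      qed
    qed
    then show ?thesis using bs ys_def by metis
  qed
  then show ?case using 3 by simp
qed

lemma runs_count: "card {j. j < length bs \<and> bs ! j} = sum_list (cmp bs)"
proof -
  have "card {j. j < length bs \<and> bs ! j} = length (filter (\<lambda>b. b) bs)"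
    by (simp add: length_filter_conv_card)
  also have "\<dots> = sum_list (cmp bs)"
  proof (induction bs rule: cmp.induct)
    case (3 bs)
    have "filter (\<lambda>b. b) bs = filter (\<lambda>b. b) (replicate (lead bs) True @ drop (lead bs) bs)" by (metis lead_split)
    then have "length (filter (\<lambda>b. b) bs) = lead bs + length (filter (\<lambda>b. b) (drop (lead bs) bs))"
      by simp
    then show ?case using 3 by simp
  qed auto
  finally show ?thesis .
qed

lemma cmp_pos: "x \<in> set (cmp bs) \<Longrightarrow> 1 \<le> x"
proof -
  assume "x \<in> set (cmp bs)"
  then have "x \<in> snd ` set (runs 0 bs)" by (simp add: runs_cmp[of 0 bs, symmetric])
  then obtain a where "(a, x) \<in> set (runs 0 bs)" by force
  then show ?thesis using runs_bounds by blast
qed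

lemma finite_bool_lists: "finite {bs :: bool list. length bs = N}"
  using finite_lists_length_eq[of "UNIV::bool set" N] by simp

lemma cmp_rep: "cmp (replicate k True @ False # rest) = (if k = 0 then cmp rest else k # cmp rest)"
  "cmp (replicate k True) = (if k = 0 then [] else [k])"
  by (cases k; simp add: lead_rep)+

definition fib :: "nat \<Rightarrow> nat list \<Rightarrow> bool list set" where
  "fib N ls = {bs. length bs = N \<and> cmp bs = ls}"

lemma finite_fib: "finite (fib N ls)"
  unfolding fib_def by (rule finite_subset[OF _ finite_bool_lists[of N]]) auto

lemma fib_Suc:
  "fib (Suc N) ls = Cons False ` fib N ls \<union> Cons True ` {bs. length bs = N \<and> cmp (True # bs) = ls}"
  unfolding fib_def
proof (intro equalityI subsetI)
  fix bs assume "bs \<in> {bs. length bs = Suc N \<and> cmp bs = ls}"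
  then show "bs \<in> Cons False ` {bs. length bs = N \<and> cmp bs = ls} \<union> Cons True ` {bs. length bs = N \<and> cmp (True # bs) = ls}"
  proof -
    assume a: "bs \<in> {bs. length bs = Suc N \<and> cmp bs = ls}"
    then obtain b bs' where bs: "bs = b # bs'" by (cases bs) auto
    show ?thesis
    proof (cases b)
      case True
      then have "bs' \<in> {bs. length bs = N \<and> cmp (True # bs) = ls}" using a bs by simp
      then show ?thesis using bs True by blast
    next
      case False
      then have "bs' \<in> {bs. length bs = N \<and> cmp bs = ls}" using a bs by simp
      then show ?thesis using bs False by blast
    qed
  qed
qed auto

lemma card_True_part:
  assumes "0 < l1"
  shows "card {bs. length bs = N \<and> cmp (True # bs) = l1 # ls'} =
    (if l1 \<le> N then card (fib (N - l1) ls') else if l1 = Suc N then (if ls' = [] then 1 else 0) else 0)"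
proof -
  let ?S = "{bs. length bs = N \<and> cmp (True # bs) = l1 # ls'}"
  have char: "bs \<in> ?S \<longleftrightarrow> length bs = N \<and> lead bs = l1 - 1 \<and> cmp (drop (lead bs) bs) = ls'" for bs
    using assms by auto
  show ?thesis
  proof (cases "l1 \<le> N")
    case True
    have "?S = (\<lambda>rest. replicate (l1 - 1) True @ False # rest) ` fib (N - l1) ls'"
    proof (intro equalityI subsetI)
      fix bs assume "bs \<in> ?S"
      then have b: "length bs = N" "lead bs = l1 - 1" "cmp (drop (lead bs) bs) = ls'" using char by auto
      have "drop (lead bs) bs \<noteq> []" using b True assms by simp
      then have dd: "drop (lead bs) bs = False # drop (Suc (lead bs)) bs" using drop_lead[of bs] by simp
      have "l1 - 1 + 1 = l1" using assms by simp
      then have "Suc (lead bs) = l1" using b by simp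
      then have dd': "drop (lead bs) bs = False # drop l1 bs" using dd by simp
      have "bs = replicate (l1 - 1) True @ False # drop l1 bs" by (metis lead_split dd' b(2))
      moreover have "drop l1 bs \<in> fib (N - l1) ls'" using b dd' by (simp add: fib_def)
      ultimately show "bs \<in> (\<lambda>rest. replicate (l1 - 1) True @ False # rest) ` fib (N - l1) ls'" by blast
    next
      fix bs assume "bs \<in> (\<lambda>rest. replicate (l1 - 1) True @ False # rest) ` fib (N - l1) ls'"
      then obtain rest where r: "bs = replicate (l1 - 1) True @ False # rest" "rest \<in> fib (N - l1) ls'" by blast
      then show "bs \<in> ?S" using True assms by (simp add: fib_def lead_rep cmp_rep)
    qed
    moreover have "inj (\<lambda>rest. replicate (l1 - 1) True @ False # rest)" by (auto intro: injI)
    ultimately show ?thesis using True by (simp add: card_image inj_on_subset)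
  next
    case False
    show ?thesis
    proof (cases "l1 = Suc N")
      case True
      have "?S = (if ls' = [] then {replicate N True} else {})"
      proof (cases "ls' = []")
        case T: True
        have "bs \<in> ?S \<longleftrightarrow> bs = replicate N True" for bs
        proof
          assume "bs \<in> ?S"
          then have b: "length bs = N" "lead bs = N" using char True by auto
          then have "drop (lead bs) bs = []" by simp
          then show "bs = replicate N True" by (metis lead_split b(2) append_Nil2)
        next
          assume "bs = replicate N True" then show "bs \<in> ?S" using T True by (simp add: lead_rep)
        qed
        then show ?thesis using T by auto
      next
        case F: False
        have "bs \<notin> ?S" for bs
        proof
          assume "bs \<in> ?S"
          then have b: "length bs = N" "lead bs = N" "cmp (drop (lead bs) bs) = ls'" using char True by auto
          then show False using F by simp
        qed
        then show ?thesis using F by auto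
      qed
      then show ?thesis using True False by simp
    next
      case F2: False
      have "bs \<notin> ?S" for bs
      proof
        assume "bs \<in> ?S"
        then have "length bs = N" "lead bs = l1 - 1" using char by auto
        then show False using lead_le[of bs] False F2 by simp
      qed
      then have S0: "?S = {}" by blast
      have c0: "card ?S = 0" by (simp only: S0 card.empty)
      show ?thesis by (simp only: c0 if_not_P[OF False] if_not_P[OF F2])
    qed
  qed
qed

lemma card_fib:
  assumes "\<forall>x\<in>set ls. 1 \<le> x"
  shows "card (fib N ls) = (Suc N - sum_list ls) choose length ls"
  using assms
proof (induction N arbitrary: ls rule: less_induct)
  case (less N0)
  show ?case
  proof (cases N0)
    case 0
    have "fib 0 ls = (if ls = [] then {[]} else {})" by (auto simp: fib_def)
    moreover have "ls \<noteq> [] \<Longrightarrow> sum_list ls \<ge> 1" using less.prems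
      by (cases ls) auto
    ultimately show ?thesis using 0 by (cases ls) auto
  next
    case (Suc N)
    have IH: "card (fib k ls') = (Suc k - sum_list ls') choose length ls'" if "k \<le> N" "\<forall>x\<in>set ls'. 1 \<le> x" for k ls'
      using less.IH that Suc by simp
    have disj: "Cons False ` fib N ls \<inter> Cons True ` {bs. length bs = N \<and> cmp (True # bs) = ls} = {}" by auto
    have fin2: "finite {bs. length bs = N \<and> cmp (True # bs) = ls}"
      by (rule finite_subset[OF _ finite_bool_lists[of N]]) auto
    have "card (fib (Suc N) ls) = card (fib N ls) + card {bs. length bs = N \<and> cmp (True # bs) = ls}"
      unfolding fib_Suc using disj fin2 finite_fib
      by (subst card_Un_disjoint) (auto simp: card_image inj_on_def)
    also have "card (fib N ls) = (Suc N - sum_list ls) choose length ls" using IH less.prems by simp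
    finally have e: "card (fib (Suc N) ls) = ((Suc N - sum_list ls) choose length ls) + card {bs. length bs = N \<and> cmp (True # bs) = ls}" .
    show ?thesis
    proof (cases ls)
      case Nil
      then have "{bs. length bs = N \<and> cmp (True # bs) = ls} = {}" by auto
      then show ?thesis using e Nil Suc by simp
    next
      case (Cons l1 ls')
      have l1: "1 \<le> l1" and ls': "\<forall>x\<in>set ls'. 1 \<le> x" using less.prems Cons by auto
      have c2: "card {bs. length bs = N \<and> cmp (True # bs) = ls} =
         (if l1 \<le> N then ((Suc (N - l1) - sum_list ls') choose length ls') else if l1 = Suc N then (if ls' = [] then 1 else 0) else 0)"
        using card_True_part[of l1 N ls'] l1 IH[of "N - l1" ls'] ls' Cons by simp
      have sp: "ls' \<noteq> [] \<Longrightarrow> sum_list ls' \<ge> 1" using ls' by (cases ls') auto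
      show ?thesis
      proof (cases "l1 \<le> N")
        case True
        show ?thesis
        proof (cases "l1 + sum_list ls' \<le> N")
          case T2: True
          define M where "M = N - (l1 + sum_list ls')"
          have a1: "Suc N - sum_list ls = Suc M" using T2 Cons M_def by simp
          have a2: "Suc (N - l1) - sum_list ls' = Suc M" using T2 M_def by simp
          have a3: "Suc N0 - sum_list ls = Suc (Suc M)" using T2 Cons M_def Suc by simp
          have "card (fib N0 ls) = (Suc M choose Suc (length ls')) + (Suc M choose length ls')"
            using e c2 True Cons Suc a1 a2 by simp
          then show ?thesis using a3 Cons by simp
        next
          case F2: False
          then have "ls' \<noteq> []" using True by auto
          then have lt: "Suc N0 - sum_list ls < length ls" using Cons F2 Suc by (cases ls') auto
          have "card (fib N0 ls) = 0" using e c2 True Cons F2 sp Suc \<open>ls' \<noteq> []\<close> by (cases ls') auto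
          then show ?thesis using binomial_eq_0[OF lt] by simp
        qed
      next
        case False
        show ?thesis
        proof (cases "l1 = Suc N")
          case True
          then show ?thesis using e c2 Cons sp Suc by (cases ls') auto
        next
          case F: False
          then show ?thesis using e c2 Cons False Suc by simp
        qed
      qed
    qed
  qed
qed

lemma lt_div_iff: "0 < (d::nat) \<Longrightarrow> j < x div d \<longleftrightarrow> Suc j * d \<le> x"
  by (simp add: less_eq_Suc_le less_eq_div_iff_mult_less_eq)

lemma mod_range_eq: "k \<in> {1..d} \<Longrightarrow> k' \<in> {1..(d::nat)} \<Longrightarrow> k mod d = k' mod d \<Longrightarrow> k = k'"
  by (metis atLeastAtMost_iff mod_less mod_self nat_less_le not_one_le_zero)

lemma mod0_split: "(i - k) mod d = 0 \<Longrightarrow> (k::nat) \<le> i \<Longrightarrow> i = k + ((i - k) div d) * d"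
  by auto

locale chn =
  fixes n d :: nat
  assumes d1: "1 \<le> d" and dn: "d < n"
begin

definition m :: "nat \<Rightarrow> nat" where "m k = nk n d k"
definition ph :: "nat \<Rightarrow> nat \<Rightarrow> nat" where "ph k j = k + j * d"

lemma nk_set: 
  assumes k: "k \<in> {1..d}"
  shows "{i \<in> {1..n}. i mod d = k mod d} = ph k ` {..< (n + d - k) div d}"
proof (intro equalityI subsetI)
  fix i assume "i \<in> {i \<in> {1..n}. i mod d = k mod d}"
  then have i: "1 \<le> i" "i \<le> n" "i mod d = k mod d" by auto
  have ki: "k \<le> i"
  proof (rule ccontr)
    assume "\<not> k \<le> i"
    then have "i < d" "i < k" using k by auto
    then have "i mod d = i" by simp
    moreover have "k mod d = (if k = d then 0 else k)" using k by auto
    ultimately show False using i \<open>i < k\<close> by (auto split: if_splits)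
  qed
  have "(i - k) mod d = 0" using i ki by (simp add: mod_eq_dvd_iff_nat)
  then have e: "i = k + ((i - k) div d) * d" using ki by (rule mod0_split)
  have "(i - k) div d < (n + d - k) div d"
  proof -
    have "Suc ((i - k) div d) * d = (i - k) + d" using e ki by (simp add: algebra_simps)
    also have "\<dots> \<le> n + d - k" using i ki k by auto
    finally show ?thesis using d1 by (simp add: lt_div_iff)
  qed
  then show "i \<in> ph k ` {..< (n + d - k) div d}" using e unfolding ph_def by blast
next
  fix i assume "i \<in> ph k ` {..< (n + d - k) div d}"
  then obtain j where j: "j < (n + d - k) div d" "i = k + j * d" unfolding ph_def by auto
  have "Suc j * d \<le> n + d - k" using j d1 by (simp add: lt_div_iff)
  then have "i \<le> n" using j k by (simp add: algebra_simps) arith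
  moreover have "i mod d = k mod d" using j by simp
  moreover have "1 \<le> i" using j k by simp
  ultimately show "i \<in> {i \<in> {1..n}. i mod d = k mod d}" by simp
qed

lemma ph_inj: "k \<in> {1..d} \<Longrightarrow> k' \<in> {1..d} \<Longrightarrow> ph k j = ph k' j' \<longleftrightarrow> k = k' \<and> j = j'"
proof
  assume k: "k \<in> {1..d}" "k' \<in> {1..d}" and e: "ph k j = ph k' j'"
  have "(k + j * d) mod d = (k' + j' * d) mod d" using e ph_def by simp
  then have "k mod d = k' mod d" by simp
  then have "k = k'" using k mod_range_eq by blast
  then show "k = k' \<and> j = j'" using e d1 unfolding ph_def by simp
qed auto

lemma m_iff: "k \<in> {1..d} \<Longrightarrow> ph k j \<le> n \<longleftrightarrow> j < m k"
proof -
  assume k: "k \<in> {1..d}"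
  have inj: "inj_on (ph k) UNIV" using ph_inj[OF k k] by (auto intro: inj_onI)
  have "m k = (n + d - k) div d"
    unfolding m_def nk_def nk_set[OF k] using inj by (simp add: card_image inj_on_subset)
  moreover have "j < (n + d - k) div d \<longleftrightarrow> Suc j * d \<le> n + d - k"
    using d1 by (simp add: lt_div_iff)
  moreover have "Suc j * d \<le> n + d - k \<longleftrightarrow> ph k j \<le> n" using k unfolding ph_def by (auto simp: algebra_simps)
  ultimately show ?thesis by simp
qed

lemma ph_pos: "k \<in> {1..d} \<Longrightarrow> 1 \<le> ph k j" unfolding ph_def by simp

lemma ph_U: "k \<in> {1..d} \<Longrightarrow> ph k j \<in> {1..n} \<longleftrightarrow> j < m k"
  using m_iff ph_pos by auto

lemma m_pos: "k \<in> {1..d} \<Longrightarrow> 1 \<le> m k"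
  using ph_U[of k 0] dn unfolding ph_def by auto

lemma decode: "u \<in> {1..n} \<Longrightarrow> \<exists>k j. k \<in> {1..d} \<and> j < m k \<and> u = ph k j"
proof -
  assume u: "u \<in> {1..n}"
  define k where "k = (u - 1) mod d + 1"
  define j where "j = (u - 1) div d"
  have k: "k \<in> {1..d}" using d1 unfolding k_def by (simp add: Suc_leI)
  have e: "u = ph k j" unfolding ph_def k_def j_def using u by (simp add: algebra_simps)
  then show ?thesis using k u ph_U by blast
qed

lemma ph_Suc: "ph k (Suc j) = ph k j + d" unfolding ph_def by simp

lemma adj_ph: "k \<in> {1..d} \<Longrightarrow> k' \<in> {1..d} \<Longrightarrow>
  \<bar>int (ph k j) - int (ph k' j')\<bar> = int d \<longleftrightarrow> k = k' \<and> (j' = Suc j \<or> j = Suc j')"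
proof
  assume k: "k \<in> {1..d}" "k' \<in> {1..d}" and a: "\<bar>int (ph k j) - int (ph k' j')\<bar> = int d"
  then have "ph k j = ph k' j' + d \<or> ph k' j' = ph k j + d" by auto
  then show "k = k' \<and> (j' = Suc j \<or> j = Suc j')"
  proof
    assume "ph k j = ph k' j' + d"
    then have "ph k j = ph k' (Suc j')" by (simp add: ph_Suc)
    then show ?thesis using ph_inj[OF k] by simp
  next
    assume "ph k' j' = ph k j + d"
    then have "ph k' j' = ph k (Suc j)" by (simp add: ph_Suc)
    then show ?thesis using ph_inj[OF k(2) k(1)] by simp
  qed
next
  assume "k = k' \<and> (j' = Suc j \<or> j = Suc j')"
  then show "\<bar>int (ph k j) - int (ph k' j')\<bar> = int d" by (auto simp: ph_Suc)
qed

definition emb :: "bool \<times> nat \<times> nat \<Rightarrow> nat \<Rightarrow> nat \<Rightarrow> nat" where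
  "emb q l t = (case q of (dr, k', y) \<Rightarrow> ph k' (if dr then y + t else y + l - t))"

definition par :: "nat \<Rightarrow> (bool \<times> nat \<times> nat) set" where
  "par l = UNIV \<times> Sigma {1..d} (\<lambda>k'. {y. y + l < m k'})"

lemma emb_inj:
  assumes l: "1 \<le> l" and q: "q \<in> par l" "q' \<in> par l" and e: "\<forall>t\<le>l. emb q l t = emb q' l t"
  shows "q = q'"
proof -
  obtain dr k y dr' k' y' where qq: "q = (dr, k, y)" "q' = (dr', k', y')" by (cases q, cases q') auto
  have k: "k \<in> {1..d}" "k' \<in> {1..d}" using q qq par_def by auto
  have e0: "emb q l 0 = emb q' l 0" and e1: "emb q l 1 = emb q' l 1" using e l by auto
  from e0 have "k = k'" using ph_inj[OF k] qq by (simp add: emb_def)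
  show ?thesis
  proof (cases dr; cases dr')
    assume "dr" "dr'" then show ?thesis using e0 ph_inj[OF k] qq by (simp add: emb_def)
  next
    assume "dr" "\<not> dr'" then show ?thesis using e0 e1 ph_inj[OF k] qq l by (simp add: emb_def)
  next
    assume "\<not> dr" "dr'" then show ?thesis using e0 e1 ph_inj[OF k] qq l by (simp add: emb_def)
  next
    assume "\<not> dr" "\<not> dr'" then show ?thesis using e0 ph_inj[OF k] qq by (simp add: emb_def)
  qed
qed

lemma emb_range:
  assumes "q = (dr, k', y)" "t \<le> l"
  shows "emb q l t = ph k' (if dr then y + t else y + l - t)" "(if dr then y + t else y + l - t) \<in> {y..y+l}"
  using assms by (auto simp: emb_def)

lemma emb_onto:
  assumes "q = (dr, k', y)" "z \<in> {y..y+l}"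
  shows "\<exists>t\<le>l. emb q l t = ph k' z"
proof (cases dr)
  case True
  then show ?thesis using assms by (intro exI[of _ "z - y"]) (auto simp: emb_def)
next
  case False
  then show ?thesis using assms by (intro exI[of _ "y + l - z"]) (auto simp: emb_def)
qed

lemma emb_inj_t:
  assumes "q \<in> par l" "t \<le> l" "t' \<le> l" "emb q l t = emb q l t'"
  shows "t = t'"
proof -
  obtain dr k y where qq: "q = (dr, k, y)" by (cases q) auto
  have k: "k \<in> {1..d}" using assms qq par_def by auto
  have "ph k (if dr then y + t else y + l - t) = ph k (if dr then y + t' else y + l - t')"
    using assms(4) qq by (simp add: emb_def)
  then have "(if dr then y + t else y + l - t) = (if dr then y + t' else y + l - t')"
    using ph_inj[OF k k] by blast
  then show ?thesis using assms(2,3) by (cases dr) auto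
qed

lemma emb_U: "q \<in> par l \<Longrightarrow> t \<le> l \<Longrightarrow> emb q l t \<in> {1..n}"
proof -
  assume q: "q \<in> par l" "t \<le> l"
  obtain dr k y where qq: "q = (dr, k, y)" by (cases q) auto
  have k: "k \<in> {1..d}" "y + l < m k" using q qq par_def by auto
  have "(if dr then y + t else y + l - t) < m k" using k q by auto
  then have "ph k (if dr then y + t else y + l - t) \<in> {1..n}" using ph_U[OF k(1)] by blast
  then show ?thesis using qq by (simp add: emb_def)
qed

lemma path_steps:
  fixes w :: "nat \<Rightarrow> nat"
  assumes st: "\<forall>t<l. \<bar>int (w (Suc t)) - int (w t)\<bar> = int d"
    and inj: "inj_on w {0..l}" and l: "1 \<le> l"
  shows "\<forall>t<l. int (w (Suc t)) - int (w t) = int (w 1) - int (w 0)"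
proof (intro allI impI)
  fix t assume "t < l"
  then show "int (w (Suc t)) - int (w t) = int (w 1) - int (w 0)"
  proof (induction t)
    case 0 then show ?case by simp
  next
    case (Suc t)
    have a: "\<bar>int (w (Suc (Suc t))) - int (w (Suc t))\<bar> = int d" "\<bar>int (w (Suc t)) - int (w t)\<bar> = int d"
      using st Suc.prems by auto
    have "w (Suc (Suc t)) \<noteq> w t"
    proof
      assume "w (Suc (Suc t)) = w t"
      moreover have "Suc (Suc t) \<in> {0..l}" "t \<in> {0..l}" using Suc.prems by auto
      ultimately show False using inj_onD[OF inj] by fastforce
    qed
    then have ne: "int (w (Suc (Suc t))) \<noteq> int (w t)" by simp
    have "int (w (Suc (Suc t))) - int (w (Suc t)) = int (w (Suc t)) - int (w t)"
      using a ne by arith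
    then show ?case using Suc by simp
  qed
qed

lemma path_lemma:
  fixes w :: "nat \<Rightarrow> nat"
  assumes st: "\<forall>t<l. \<bar>int (w (Suc t)) - int (w t)\<bar> = int d"
    and inj: "inj_on w {0..l}" and l: "1 \<le> l" and U: "\<forall>t\<le>l. w t \<in> {1..n}"
  shows "\<exists>q\<in>par l. \<forall>t\<le>l. w t = emb q l t"
proof -
  define s where "s = int (w 1) - int (w 0)"
  have ps: "\<forall>t<l. int (w (Suc t)) - int (w t) = s" using path_steps[OF st inj l] unfolding s_def by blast
  have lin: "int (w t) = int (w 0) + int t * s" if "t \<le> l" for t
    using that
  proof (induction t)
    case (Suc t)
    then have "t < l" by simp
    then have "int (w (Suc t)) - int (w t) = s" using ps by blast
    then show ?case using Suc by (simp add: algebra_simps)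
  qed simp
  have "0 < l" using l by simp
  then have "\<bar>int (w (Suc 0)) - int (w 0)\<bar> = int d" using st by blast
  then have "\<bar>s\<bar> = int d" unfolding s_def by simp
  then consider "s = int d" | "s = - int d" by (cases "0 \<le> s") auto
  then show ?thesis
  proof cases
    case 1
    have w0: "w 0 \<in> {1..n}" using U by blast
    obtain k y where ky: "k \<in> {1..d}" "y < m k" "w 0 = ph k y" using decode[OF w0] by blast
    have wt: "w t = ph k (y + t)" if "t \<le> l" for t
    proof -
      have "int (w t) = int (ph k (y + t))" using lin[OF that] 1 ky by (simp add: ph_def algebra_simps)
      then show ?thesis by (simp only: of_nat_eq_iff)
    qed
    have "ph k (y + l) \<in> {1..n}" using wt[of l] U by auto
    then have "y + l < m k" using ph_U[OF ky(1)] by blast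
    then have "(True, k, y) \<in> par l" using ky(1) by (simp add: par_def)
    moreover have "\<forall>t\<le>l. w t = emb (True, k, y) l t" using wt by (simp add: emb_def)
    ultimately show ?thesis by blast
  next
    case 2
    have wl: "w l \<in> {1..n}" using U by blast
    obtain k y where ky: "k \<in> {1..d}" "y < m k" "w l = ph k y" using decode[OF wl] by blast
    have wt: "w t = ph k (y + l - t)" if "t \<le> l" for t
    proof -
      have "int (w t) = int (w l) + int (l - t) * int d" using lin[OF that] lin[of l] 2 that
        by (simp add: algebra_simps of_nat_diff)
      then have "int (w t) = int (k + y * d + (l - t) * d)" using ky by (simp add: ph_def)
      then have "w t = k + y * d + (l - t) * d" by linarith
      also have "\<dots> = ph k (y + l - t)" using that unfolding ph_def by (simp add: algebra_simps)
      finally show ?thesis .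
    qed
    have "ph k (y + l) \<in> {1..n}" using wt[of 0] U by auto
    then have "y + l < m k" using ph_U[OF ky(1)] by blast
    then have "(False, k, y) \<in> par l" using ky(1) by (simp add: par_def)
    moreover have "\<forall>t\<le>l. w t = emb (False, k, y) l t" using wt by (simp add: emb_def)
    ultimately show ?thesis by blast
  qed
qed

end

locale rc = chn +
  fixes R :: "(nat \<times> nat \<times> nat) list"
  assumes P1: "\<forall>(k,x,l)\<in>set R. k \<in> {1..d} \<and> 1 \<le> l \<and> x + l < m k"
    and P2: "distinct R"
    and P3: "\<forall>a\<in>set R. \<forall>b\<in>set R. a \<noteq> b \<longrightarrow> fst a = fst b \<longrightarrow>
        {fst (snd a)..fst (snd a) + snd (snd a)} \<inter> {fst (snd b)..fst (snd b) + snd (snd b)} = {}"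
begin

definition "I = {1..length R}"
definition "K i = fst (R ! (i - 1))"
definition "X i = fst (snd (R ! (i - 1)))"
definition "Ln i = snd (snd (R ! (i - 1)))"

definition "SR = {ph (K i) j | i j. i \<in> I \<and> X i \<le> j \<and> j < X i + Ln i}"
definition "cpt pm = (\<forall>e\<in>SR. \<bar>int (pm (e + d)) - int (pm e)\<bar> = int d)"
definition "PP = PiE I (\<lambda>i. par (Ln i))"
definition "Gr p = (\<lambda>(i,t). (ph (K i) (X i + t), emb (p i) (Ln i) t)) ` Sigma I (\<lambda>i. {0..Ln i})"
definition "Agree p = {pm. pm permutes {1..n} \<and> (\<forall>(a,b)\<in>Gr p. pm a = b)}"
definition "Dj p = (\<forall>i\<in>I. \<forall>j\<in>I. i \<noteq> j \<longrightarrow> fst (snd (p i)) = fst (snd (p j)) \<longrightarrow>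
    {snd (snd (p i))..snd (snd (p i)) + Ln i} \<inter> {snd (snd (p j))..snd (snd (p j)) + Ln j} = {})"

lemma finite_I: "finite I" by (simp add: I_def)
lemma card_I: "card I = length R" by (simp add: I_def)

lemma idx: "i \<in> I \<Longrightarrow> K i \<in> {1..d} \<and> 1 \<le> Ln i \<and> X i + Ln i < m (K i)"
proof -
  assume "i \<in> I"
  then have "R ! (i - 1) \<in> set R" by (auto simp: I_def)
  moreover obtain k x l where kxl: "R ! (i - 1) = (k, x, l)" by (cases "R ! (i - 1)") auto
  ultimately have "k \<in> {1..d} \<and> 1 \<le> l \<and> x + l < m k" using P1 by fastforce
  then show ?thesis unfolding K_def X_def Ln_def kxl by simp
qed

lemma blk:
  assumes ij: "i \<in> I" "j \<in> I" and t: "t \<le> Ln i" "t' \<le> Ln j"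
    and e: "ph (K i) (X i + t) = ph (K j) (X j + t')"
  shows "i = j \<and> t = t'"
proof -
  have k: "K i \<in> {1..d}" "K j \<in> {1..d}" using idx ij by auto
  have kk: "K i = K j" and xx: "X i + t = X j + t'" using ph_inj[OF k] e by auto
  have "i = j"
  proof (rule ccontr)
    assume "i \<noteq> j"
    then have "R ! (i - 1) \<noteq> R ! (j - 1)" using ij P2 by (auto simp: I_def nth_eq_iff_index_eq)
    moreover have "R ! (i - 1) \<in> set R" "R ! (j - 1) \<in> set R" using ij by (auto simp: I_def)
    ultimately have "{X i..X i + Ln i} \<inter> {X j..X j + Ln j} = {}"
      using P3 kk unfolding K_def X_def Ln_def by blast
    moreover have "X i + t \<in> {X i..X i + Ln i} \<inter> {X j..X j + Ln j}" using xx t by auto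
    ultimately show False by blast
  qed
  then show ?thesis using xx by simp
qed

lemma finite_par: "finite (par l)"
  unfolding par_def by (intro finite_cartesian_product finite_SigmaI) (auto intro: finite_lt_set)

lemma finite_PP: "finite PP"
  unfolding PP_def by (intro finite_PiE finite_I finite_par)

lemma blk_U: "i \<in> I \<Longrightarrow> t \<le> Ln i \<Longrightarrow> ph (K i) (X i + t) \<in> {1..n}"
  using idx ph_U by fastforce

lemma emb_adj:
  assumes q: "q \<in> par l" and t: "t < l"
  shows "\<bar>int (emb q l (Suc t)) - int (emb q l t)\<bar> = int d"
proof -
  obtain dr k y where qq: "q = (dr, k, y)" by (cases q) auto
  have k: "k \<in> {1..d}" "y + l < m k" using q qq par_def by auto
  show ?thesis
  proof (cases dr)
    case True
    then show ?thesis using qq adj_ph[OF k(1) k(1)] by (simp add: emb_def)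
  next
    case False
    have "y + l - t = Suc (y + l - Suc t)" using t by simp
    then show ?thesis using qq adj_ph[OF k(1) k(1), of "y + l - t" "y + l - Suc t"] False
      by (simp add: emb_def)
  qed
qed

lemma step1: "{\<pi>. \<pi> permutes {1..n} \<and> cpt \<pi>} = (\<Union>p\<in>PP. Agree p)"
proof (intro equalityI subsetI)
  fix \<pi> assume "\<pi> \<in> {\<pi>. \<pi> permutes {1..n} \<and> cpt \<pi>}"
  then have p: "\<pi> permutes {1..n}" and c: "cpt \<pi>" by auto
  have ex: "\<exists>q. q \<in> par (Ln i) \<and> (\<forall>t\<le>Ln i. \<pi> (ph (K i) (X i + t)) = emb q (Ln i) t)" if i: "i \<in> I" for i
  proof -
    define w where "w t = \<pi> (ph (K i) (X i + t))" for t
    have st: "\<forall>t<Ln i. \<bar>int (w (Suc t)) - int (w t)\<bar> = int d"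
    proof (intro allI impI)
      fix t assume t: "t < Ln i"
      have "X i \<le> X i + t" "X i + t < X i + Ln i" using t by auto
      then have "ph (K i) (X i + t) \<in> SR" unfolding SR_def using i by blast
      moreover have "ph (K i) (X i + t) + d = ph (K i) (X i + Suc t)" by (simp add: ph_Suc[symmetric])
      ultimately show "\<bar>int (w (Suc t)) - int (w t)\<bar> = int d" using c unfolding cpt_def w_def by force
    qed
    have inj: "inj_on w {0..Ln i}"
    proof (rule inj_onI)
      fix t t' assume tt: "t \<in> {0..Ln i}" "t' \<in> {0..Ln i}" "w t = w t'"
      then have "ph (K i) (X i + t) = ph (K i) (X i + t')" using permutes_inj[OF p] unfolding w_def by (auto dest: injD)
      then show "t = t'" using blk[OF i i] tt by auto
    qed
    have U: "\<forall>t\<le>Ln i. w t \<in> {1..n}" unfolding w_def using blk_U[OF i] permutes_in_image[OF p] by blast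
    obtain q where "q \<in> par (Ln i)" "\<forall>t\<le>Ln i. w t = emb q (Ln i) t"
      using path_lemma[OF st inj _ U] idx[OF i] by blast
    then show ?thesis unfolding w_def by blast
  qed
  define Q where "Q i q \<longleftrightarrow> q \<in> par (Ln i) \<and> (\<forall>t\<le>Ln i. \<pi> (ph (K i) (X i + t)) = emb q (Ln i) t)" for i q
  define p where "p = (\<lambda>i\<in>I. SOME q. Q i q)"
  have "Q i (p i)" if "i \<in> I" for i
  proof -
    have "\<exists>q. Q i q" using ex[OF that] unfolding Q_def .
    then have "Q i (SOME q. Q i q)" by (rule someI_ex)
    then show ?thesis using that unfolding p_def by simp
  qed
  then have pi: "p i \<in> par (Ln i) \<and> (\<forall>t\<le>Ln i. \<pi> (ph (K i) (X i + t)) = emb (p i) (Ln i) t)" if "i \<in> I" for i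
    using that unfolding Q_def by blast
  have "p \<in> PP" unfolding PP_def using pi by (auto simp: p_def)
  moreover have "\<pi> \<in> Agree p" unfolding Agree_def Gr_def using p pi by auto
  ultimately show "\<pi> \<in> (\<Union>p\<in>PP. Agree p)" by blast
next
  fix \<pi> assume "\<pi> \<in> (\<Union>p\<in>PP. Agree p)"
  then obtain p where p: "p \<in> PP" "\<pi> \<in> Agree p" by blast
  have pp: "\<pi> permutes {1..n}" using p unfolding Agree_def by auto
  have ag: "\<pi> (ph (K i) (X i + t)) = emb (p i) (Ln i) t" if "i \<in> I" "t \<le> Ln i" for i t
    using p that unfolding Agree_def Gr_def by fastforce
  have "cpt \<pi>" unfolding cpt_def
  proof
    fix e assume "e \<in> SR"
    then obtain i j where ij: "i \<in> I" "X i \<le> j" "j < X i + Ln i" "e = ph (K i) j" unfolding SR_def by blast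
    define t where "t = j - X i"
    have e1: "e = ph (K i) (X i + t)" using ij t_def by simp
    have e2: "e + d = ph (K i) (X i + Suc t)" using e1 by (simp add: ph_Suc[symmetric])
    have t: "t < Ln i" using ij t_def by simp
    have "p i \<in> par (Ln i)" using p ij unfolding PP_def by auto
    moreover have "\<pi> (e + d) = emb (p i) (Ln i) (Suc t)" using ag[OF ij(1), of "Suc t"] e2 t by simp
    moreover have "\<pi> e = emb (p i) (Ln i) t" using ag[OF ij(1), of t] e1 t by simp
    ultimately show "\<bar>int (\<pi> (e + d)) - int (\<pi> e)\<bar> = int d"
      using t emb_adj by simp
  qed
  then show "\<pi> \<in> {\<pi>. \<pi> permutes {1..n} \<and> cpt \<pi>}" using pp by simp
qed

lemma step2: "p \<in> PP \<Longrightarrow> p' \<in> PP \<Longrightarrow> p \<noteq> p' \<Longrightarrow> Agree p \<inter> Agree p' = {}"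
proof (rule ccontr)
  assume p: "p \<in> PP" "p' \<in> PP" "p \<noteq> p'" and ne: "Agree p \<inter> Agree p' \<noteq> {}"
  then obtain \<pi> where pi: "\<pi> \<in> Agree p" "\<pi> \<in> Agree p'" by blast
  have ag: "\<pi> (ph (K i) (X i + t)) = emb (q i) (Ln i) t" if "q \<in> {p, p'}" "i \<in> I" "t \<le> Ln i" for q i t
    using pi that unfolding Agree_def Gr_def by fastforce
  have "p i = p' i" if i: "i \<in> I" for i
  proof (rule emb_inj)
    show "1 \<le> Ln i" using idx[OF i] by simp
    show "p i \<in> par (Ln i)" "p' i \<in> par (Ln i)" using p i unfolding PP_def by auto
    show "\<forall>t\<le>Ln i. emb (p i) (Ln i) t = emb (p' i) (Ln i) t" using ag[of p i] ag[of p' i] i by simp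
  qed
  then have "p = p'" using p unfolding PP_def by (auto intro: PiE_ext)
  then show False using p by simp
qed

lemma card_Gr:
  assumes "p \<in> PP"
  shows "card (Gr p) = sum Ln I + length R"
proof -
  have "inj_on (\<lambda>(i,t). (ph (K i) (X i + t), emb (p i) (Ln i) t)) (Sigma I (\<lambda>i. {0..Ln i}))"
    by (rule inj_onI) (use blk in auto)
  then have "card (Gr p) = card (Sigma I (\<lambda>i. {0..Ln i}))" unfolding Gr_def by (rule card_image)
  also have "\<dots> = (\<Sum>i\<in>I. Suc (Ln i))" using finite_I by (simp add: card_SigmaI)
  also have "\<dots> = sum Ln I + length R" using card_I by (simp add: sum_Suc)
  finally show ?thesis .
qed

lemma step3:
  assumes p: "p \<in> PP"
  shows "card (Agree p) = (if Dj p then fact (n - (sum Ln I + length R)) else 0)"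
proof (cases "Dj p")
  case True
  have pi: "p i \<in> par (Ln i)" if "i \<in> I" for i using p that unfolding PP_def by auto
  have "card (Agree p) = fact (card {1..n} - card (Gr p))"
    unfolding Agree_def
  proof (rule card_perm_extend)
    show "finite {1..n}" by simp
    show "fst ` Gr p \<subseteq> {1..n}" unfolding Gr_def using blk_U by auto
    show "snd ` Gr p \<subseteq> {1..n}"
    proof
      fix b assume "b \<in> snd ` Gr p"
      then obtain i t where "i \<in> I" "t \<le> Ln i" "b = emb (p i) (Ln i) t" unfolding Gr_def by auto
      then show "b \<in> {1..n}" using emb_U pi by blast
    qed
    fix a b a' b' assume ab: "(a, b) \<in> Gr p" "(a', b') \<in> Gr p"
    then obtain i t j t' where it: "i \<in> I" "t \<le> Ln i" "a = ph (K i) (X i + t)" "b = emb (p i) (Ln i) t"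
      and jt: "j \<in> I" "t' \<le> Ln j" "a' = ph (K j) (X j + t')" "b' = emb (p j) (Ln j) t'"
      unfolding Gr_def by auto
    show "(a = a') = (b = b')"
    proof
      assume "a = a'"
      then have "i = j \<and> t = t'" using blk it jt by blast
      then show "b = b'" using it jt by simp
    next
      assume bb: "b = b'"
      show "a = a'"
      proof (cases "i = j")
        case True
        then have "t = t'" using emb_inj_t[OF pi[OF it(1)]] it jt bb by blast
        then show ?thesis using True it jt by simp
      next
        case False
        obtain dr k y where q1: "p i = (dr, k, y)" by (cases "p i") auto
        obtain dr' k' y' where q2: "p j = (dr', k', y')" by (cases "p j") auto
        have "p i \<in> par (Ln i)" "p j \<in> par (Ln j)" using pi it(1) jt(1) by auto
        then have kk: "k \<in> {1..d}" "k' \<in> {1..d}" using q1 q2 unfolding par_def by auto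
        have "ph k (if dr then y + t else y + Ln i - t) = ph k' (if dr' then y' + t' else y' + Ln j - t')"
          using bb it jt q1 q2 emb_range by simp
        then have "k = k'" "(if dr then y + t else y + Ln i - t) = (if dr' then y' + t' else y' + Ln j - t')"
          using ph_inj[OF kk] by auto
        moreover have "(if dr then y + t else y + Ln i - t) \<in> {y..y + Ln i}"
          "(if dr' then y' + t' else y' + Ln j - t') \<in> {y'..y' + Ln j}"
          using emb_range(2)[OF q1 it(2)] emb_range(2)[OF q2 jt(2)] by auto
        ultimately have "{y..y + Ln i} \<inter> {y'..y' + Ln j} \<noteq> {}" by auto
        moreover have "{y..y + Ln i} \<inter> {y'..y' + Ln j} = {}"
          using True it(1) jt(1) False q1 q2 \<open>k = k'\<close> unfolding Dj_def by fastforce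
        ultimately show ?thesis by blast
      qed
    qed
  qed
  then show ?thesis using True card_Gr[OF p] by simp
next
  case False
  then obtain i j where ij: "i \<in> I" "j \<in> I" "i \<noteq> j" "fst (snd (p i)) = fst (snd (p j))"
    "{snd (snd (p i))..snd (snd (p i)) + Ln i} \<inter> {snd (snd (p j))..snd (snd (p j)) + Ln j} \<noteq> {}"
    unfolding Dj_def by blast
  obtain dr k y where q1: "p i = (dr, k, y)" by (cases "p i") auto
  obtain dr' k' y' where q2: "p j = (dr', k', y')" by (cases "p j") auto
  have "{y..y + Ln i} \<inter> {y'..y' + Ln j} \<noteq> {}" using ij(5) q1 q2 by simp
  then obtain z where z: "z \<in> {y..y + Ln i}" "z \<in> {y'..y' + Ln j}" by blast
  have kk: "k = k'" using ij q1 q2 by simp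
  obtain t where t: "t \<le> Ln i" "emb (p i) (Ln i) t = ph k z" using emb_onto[OF q1 z(1)] by blast
  obtain t' where t': "t' \<le> Ln j" "emb (p j) (Ln j) t' = ph k z" using emb_onto[OF q2 z(2)] kk by blast
  have "(ph (K i) (X i + t), ph k z) \<in> Gr p" unfolding Gr_def using ij t by (auto intro!: image_eqI[of _ _ "(i,t)"])
  moreover have "(ph (K j) (X j + t'), ph k z) \<in> Gr p" unfolding Gr_def using ij t' by (auto intro!: image_eqI[of _ _ "(j,t')"])
  moreover have "ph (K i) (X i + t) \<noteq> ph (K j) (X j + t')" using blk ij t t' by blast
  ultimately have "Agree p = {}" unfolding Agree_def
    by (intro card_perm_extend_noninj[of "ph (K i) (X i + t)" "ph k z" "Gr p" "ph (K j) (X j + t')" "ph k z"]) auto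
  then show ?thesis using False by simp
qed

lemma step4: "card {\<pi>. \<pi> permutes {1..n} \<and> cpt \<pi>} = card {p \<in> PP. Dj p} * fact (n - (sum Ln I + length R))"
proof -
  have fa: "finite (Agree p)" for p
    unfolding Agree_def by (rule finite_subset[OF _ finite_permutations[of "{1..n}"]]) auto
  have "card {\<pi>. \<pi> permutes {1..n} \<and> cpt \<pi>} = (\<Sum>p\<in>PP. card (Agree p))"
    unfolding step1 using finite_PP fa step2 by (intro card_UN_disjoint) auto
  also have "\<dots> = (\<Sum>p\<in>PP. if Dj p then fact (n - (sum Ln I + length R)) else 0)"
    using step3 by (intro sum.cong) auto
  also have "\<dots> = card {p \<in> PP. Dj p} * fact (n - (sum Ln I + length R))"
    using finite_PP by (simp add: sum.inter_filter[symmetric])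
  finally show ?thesis .
qed

end

context rc
begin

definition "DjKY q = (\<forall>i\<in>I. \<forall>j\<in>I. i \<noteq> j \<longrightarrow> fst (q i) = fst (q j) \<longrightarrow>
    {snd (q i)..snd (q i) + Ln i} \<inter> {snd (q j)..snd (q j) + Ln j} = {})"
definition "DKY = {q \<in> PiE I (\<lambda>i. Sigma {1..d} (\<lambda>k'. {y. y + Ln i < m k'})). DjKY q}"

lemma step5: "card {p \<in> PP. Dj p} = 2 ^ length R * card DKY"
proof -
  have "bij_betw (\<lambda>p. (restrict (fst \<circ> p) I, restrict (snd \<circ> p) I)) {p \<in> PP. Dj p}
          (PiE I (\<lambda>_. UNIV :: bool set) \<times> DKY)"
  proof (rule bij_betw_byWitness[where f' = "\<lambda>(u, q). (\<lambda>i\<in>I. (u i, q i))"])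
    show "\<forall>a\<in>{p \<in> PP. Dj p}. (\<lambda>(u, q). \<lambda>i\<in>I. (u i, q i)) (restrict (fst \<circ> a) I, restrict (snd \<circ> a) I) = a"
      by (auto simp: PP_def PiE_iff extensional_def fun_eq_iff)
    show "\<forall>a'\<in>PiE I (\<lambda>_. UNIV) \<times> DKY.
       (\<lambda>p. (restrict (fst \<circ> p) I, restrict (snd \<circ> p) I)) ((\<lambda>(u, q). \<lambda>i\<in>I. (u i, q i)) a') = a'"
      by (auto simp: DKY_def PiE_iff extensional_def fun_eq_iff)
    show "(\<lambda>p. (restrict (fst \<circ> p) I, restrict (snd \<circ> p) I)) ` {p \<in> PP. Dj p} \<subseteq> PiE I (\<lambda>_. UNIV) \<times> DKY"
      by (auto simp: PP_def DKY_def DjKY_def Dj_def PiE_iff par_def)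
    show "(\<lambda>(u, q). \<lambda>i\<in>I. (u i, q i)) ` (PiE I (\<lambda>_. UNIV) \<times> DKY) \<subseteq> {p \<in> PP. Dj p}"
      by (auto simp: PP_def DKY_def DjKY_def Dj_def PiE_iff par_def)
  qed
  then have "card {p \<in> PP. Dj p} = card (PiE I (\<lambda>_. UNIV :: bool set) \<times> DKY)"
    by (rule bij_betw_same_card)
  also have "\<dots> = 2 ^ length R * card DKY"
    by (simp add: card_cartesian_product card_PiE finite_I card_I)
  finally show ?thesis .
qed

definition "Jof a k = {i \<in> I. a i = k}"

lemma step6: "card DKY = (\<Sum>a\<in>PiE I (\<lambda>_. {1..d}). \<Prod>k\<in>{1..d}. card (plc (m k) (Jof a k) Ln))"
proof -
  let ?S = "Sigma (PiE I (\<lambda>_. {1..d})) (\<lambda>a. PiE {1..d} (\<lambda>k. plc (m k) (Jof a k) Ln))"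
  let ?f = "\<lambda>q. (restrict (fst \<circ> q) I, \<lambda>k\<in>{1..d}. restrict (snd \<circ> q) {i\<in>I. fst (q i) = k})"
  let ?g = "\<lambda>(a, z). \<lambda>i\<in>I. (a i, z (a i) i)"
  have "bij_betw ?f DKY ?S"
  proof (rule bij_betw_byWitness[where f' = ?g])
    show "\<forall>q\<in>DKY. ?g (?f q) = q"
    proof
      fix q assume q: "q \<in> DKY"
      show "?g (?f q) = q"
      proof
        fix i show "?g (?f q) i = q i"
          using q by (cases "i \<in> I") (auto simp: DKY_def PiE_iff extensional_def)
      qed
    qed
    show "\<forall>az\<in>?S. ?f (?g az) = az"
    proof
      fix az assume az: "az \<in> ?S"
      obtain a z where azz: "az = (a, z)" by (cases az) auto
      have a: "a \<in> PiE I (\<lambda>_. {1..d})" and z: "\<And>k. k \<in> {1..d} \<Longrightarrow> z k \<in> plc (m k) (Jof a k) Ln"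
        and zext: "z \<in> extensional {1..d}"
        using az azz by (auto simp: PiE_iff)
      have "restrict (fst \<circ> ?g (a, z)) I = a" using a by (auto simp: PiE_iff extensional_def fun_eq_iff)
      moreover have "(\<lambda>k\<in>{1..d}. restrict (snd \<circ> ?g (a, z)) {i\<in>I. fst (?g (a, z) i) = k}) = z"
      proof
        fix k
        show "(\<lambda>k\<in>{1..d}. restrict (snd \<circ> ?g (a, z)) {i\<in>I. fst (?g (a, z) i) = k}) k = z k"
        proof (cases "k \<in> {1..d}")
          case True
          have zk: "z k \<in> extensional (Jof a k)" using z[OF True] by (auto simp: plc_def PiE_iff)
          show ?thesis
          proof
            fix i
            show "(\<lambda>k\<in>{1..d}. restrict (snd \<circ> ?g (a, z)) {i\<in>I. fst (?g (a, z) i) = k}) k i = z k i"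
              using True zk by (cases "i \<in> I \<and> a i = k") (auto simp: Jof_def extensional_def)
          qed
        next
          case False then show ?thesis using zext by (auto simp: extensional_def)
        qed
      qed
      ultimately show "?f (?g az) = az" using azz by simp
    qed
    show "?f ` DKY \<subseteq> ?S"
    proof
      fix x assume "x \<in> ?f ` DKY"
      then obtain q where q: "q \<in> DKY" "x = ?f q" by blast
      have qi: "\<And>i. i \<in> I \<Longrightarrow> fst (q i) \<in> {1..d} \<and> snd (q i) + Ln i < m (fst (q i))"
        and dj: "DjKY q" using q by (auto simp: DKY_def PiE_iff)
      have "restrict (fst \<circ> q) I \<in> PiE I (\<lambda>_. {1..d})" using qi by auto
      moreover have "restrict (snd \<circ> q) {i\<in>I. fst (q i) = k} \<in> plc (m k) (Jof (restrict (fst \<circ> q) I) k) Ln"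
        if "k \<in> {1..d}" for k
      proof -
        have "Jof (restrict (fst \<circ> q) I) k = {i\<in>I. fst (q i) = k}" by (auto simp: Jof_def)
        then show ?thesis using qi dj unfolding plc_def DjKY_def by auto
      qed
      ultimately show "x \<in> ?S" using q(2) by auto
    qed
    show "?g ` ?S \<subseteq> DKY"
    proof
      fix x assume "x \<in> ?g ` ?S"
      then obtain a z where az: "(a, z) \<in> ?S" "x = ?g (a, z)" by blast
      have a: "\<And>i. i \<in> I \<Longrightarrow> a i \<in> {1..d}" and z: "\<And>k. k \<in> {1..d} \<Longrightarrow> z k \<in> plc (m k) (Jof a k) Ln"
        using az by (auto simp: PiE_iff)
      have zi: "z (a i) i + Ln i < m (a i)" if "i \<in> I" for i
        using z[OF a[OF that]] that by (auto simp: plc_def PiE_iff Jof_def)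
      have "x \<in> PiE I (\<lambda>i. Sigma {1..d} (\<lambda>k'. {y. y + Ln i < m k'}))" using az(2) a zi by auto
      moreover have "DjKY x"
        unfolding DjKY_def
      proof (intro ballI impI)
        fix i j assume ij: "i \<in> I" "j \<in> I" "i \<noteq> j" "fst (x i) = fst (x j)"
        then have aij: "a i = a j" using az(2) by simp
        have "i \<in> Jof a (a i)" "j \<in> Jof a (a i)" using ij aij by (auto simp: Jof_def)
        then have "{z (a i) i..z (a i) i + Ln i} \<inter> {z (a i) j..z (a i) j + Ln j} = {}"
          using z[OF a[OF ij(1)]] ij(3) unfolding plc_def by blast
        then show "{snd (x i)..snd (x i) + Ln i} \<inter> {snd (x j)..snd (x j) + Ln j} = {}"
          using az(2) ij aij by simp
      qed
      ultimately show "x \<in> DKY" by (simp add: DKY_def)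
    qed
  qed
  then have "card DKY = card ?S" by (rule bij_betw_same_card)
  also have "\<dots> = (\<Sum>a\<in>PiE I (\<lambda>_. {1..d}). card (PiE {1..d} (\<lambda>k. plc (m k) (Jof a k) Ln)))"
    by (rule card_SigmaI) (auto intro!: finite_PiE finite_I finite_plc simp: Jof_def)
  also have "\<dots> = (\<Sum>a\<in>PiE I (\<lambda>_. {1..d}). \<Prod>k\<in>{1..d}. card (plc (m k) (Jof a k) Ln))"
    by (simp add: card_PiE)
  finally show ?thesis .
qed

end

context rc
begin

definition "part a = (\<lambda>k\<in>{1..d}. Jof a k)"
definition "QJ0 = {J \<in> PiE {1..d} (\<lambda>k. Pow I). (\<forall>k\<in>{1..d}. \<forall>k'\<in>{1..d}. k \<noteq> k' \<longrightarrow> J k \<inter> J k' = {})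
    \<and> (\<Union>k\<in>{1..d}. J k) = I}"

lemma part_bij: "bij_betw part (PiE I (\<lambda>_. {1..d})) QJ0"
proof (rule bij_betw_byWitness[where f' = "\<lambda>J. \<lambda>i\<in>I. THE k. k \<in> {1..d} \<and> i \<in> J k"])
  show "\<forall>a\<in>PiE I (\<lambda>_. {1..d}). (\<lambda>i\<in>I. THE k. k \<in> {1..d} \<and> i \<in> part a k) = a"
  proof
    fix a assume a: "a \<in> PiE I (\<lambda>_. {1..d})"
    show "(\<lambda>i\<in>I. THE k. k \<in> {1..d} \<and> i \<in> part a k) = a"
    proof
      fix i show "(\<lambda>i\<in>I. THE k. k \<in> {1..d} \<and> i \<in> part a k) i = a i"
      proof (cases "i \<in> I")
        case True
        have "(THE k. k \<in> {1..d} \<and> i \<in> part a k) = a i"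
          by (rule the_equality) (use a True in \<open>auto simp: part_def Jof_def\<close>)
        then show ?thesis using True by simp
      next
        case False then show ?thesis using a by (auto simp: PiE_iff extensional_def)
      qed
    qed
  qed
  show "\<forall>J\<in>QJ0. part (\<lambda>i\<in>I. THE k. k \<in> {1..d} \<and> i \<in> J k) = J"
  proof
    fix J assume J: "J \<in> QJ0"
    have th: "(THE k. k \<in> {1..d} \<and> i \<in> J k) = k" if "k \<in> {1..d}" "i \<in> J k" for i k
    proof (rule the_equality)
      show "k \<in> {1..d} \<and> i \<in> J k" using that by simp
      fix k' assume "k' \<in> {1..d} \<and> i \<in> J k'"
      moreover have "\<forall>k\<in>{1..d}. \<forall>k'\<in>{1..d}. k \<noteq> k' \<longrightarrow> J k \<inter> J k' = {}" using J unfolding QJ0_def by blast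
      ultimately show "k' = k" using that by blast
    qed
    have Ju: "(\<Union>k\<in>{1..d}. J k) = I" using J unfolding QJ0_def by blast
    have ex: "\<exists>k. k \<in> {1..d} \<and> i \<in> J k" if "i \<in> I" for i
    proof -
      have "i \<in> (\<Union>k\<in>{1..d}. J k)" using Ju that by simp
      then show ?thesis by blast
    qed
    show "part (\<lambda>i\<in>I. THE k. k \<in> {1..d} \<and> i \<in> J k) = J"
    proof
      fix k show "part (\<lambda>i\<in>I. THE k. k \<in> {1..d} \<and> i \<in> J k) k = J k"
      proof (cases "k \<in> {1..d}")
        case True
        have "J k \<subseteq> I" using J True by (auto simp: QJ0_def PiE_iff)
        moreover have "i \<in> J k" if "i \<in> I" "(THE k. k \<in> {1..d} \<and> i \<in> J k) = k" for i
          using ex[OF that(1)] th that(2) by metis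
        ultimately have "{i \<in> I. (\<lambda>i\<in>I. THE k. k \<in> {1..d} \<and> i \<in> J k) i = k} = J k"
        proof (intro equalityI subsetI)
          fix x assume "x \<in> {i \<in> I. (\<lambda>i\<in>I. THE k. k \<in> {1..d} \<and> i \<in> J k) i = k}"
          then have "x \<in> I" "(THE k. k \<in> {1..d} \<and> x \<in> J k) = k" by auto
          then show "x \<in> J k" using \<open>\<And>i. i \<in> I \<Longrightarrow> (THE k. k \<in> {1..d} \<and> i \<in> J k) = k \<Longrightarrow> i \<in> J k\<close> by blast
        next
          fix x assume x: "x \<in> J k"
          then have "x \<in> I" using \<open>J k \<subseteq> I\<close> by blast
          moreover have "(THE k. k \<in> {1..d} \<and> x \<in> J k) = k" using th[OF True x] .
          ultimately show "x \<in> {i \<in> I. (\<lambda>i\<in>I. THE k. k \<in> {1..d} \<and> i \<in> J k) i = k}" by simp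
        qed
        then show ?thesis using True unfolding part_def Jof_def by simp
      next
        case False then show ?thesis using J by (auto simp: part_def QJ0_def PiE_iff extensional_def)
      qed
    qed
  qed
  show "part ` PiE I (\<lambda>_. {1..d}) \<subseteq> QJ0"
    by (auto simp: part_def QJ0_def Jof_def PiE_iff)
  show "(\<lambda>J. \<lambda>i\<in>I. THE k. k \<in> {1..d} \<and> i \<in> J k) ` QJ0 \<subseteq> PiE I (\<lambda>_. {1..d})"
  proof clarify
    fix J assume J: "J \<in> QJ0"
    have Ju: "(\<Union>k\<in>{1..d}. J k) = I" and Jd: "\<forall>k\<in>{1..d}. \<forall>k'\<in>{1..d}. k \<noteq> k' \<longrightarrow> J k \<inter> J k' = {}"
      using J unfolding QJ0_def by blast+
    have "(THE k. k \<in> {1..d} \<and> i \<in> J k) \<in> {1..d}" if i: "i \<in> I" for i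
    proof -
      have "i \<in> (\<Union>k\<in>{1..d}. J k)" using Ju i by simp
      then obtain k where k: "k \<in> {1..d}" "i \<in> J k" by blast
      have "(THE k. k \<in> {1..d} \<and> i \<in> J k) = k"
      proof (rule the_equality)
        show "k \<in> {1..d} \<and> i \<in> J k" using k by simp
        fix k' assume "k' \<in> {1..d} \<and> i \<in> J k'"
        then show "k' = k" using Jd k by blast
      qed
      then show ?thesis using k by simp
    qed
    then show "(\<lambda>i\<in>I. THE k. k \<in> {1..d} \<and> i \<in> J k) \<in> PiE I (\<lambda>_. {1..d})" by auto
  qed
qed

definition "LL = map (\<lambda>x. snd (snd x)) R"

lemma LL_nth: "i \<in> I \<Longrightarrow> LL ! (i - 1) = Ln i"
  by (auto simp: LL_def Ln_def I_def)

lemma LL_nth': "i \<in> I \<Longrightarrow> LL ! (i - Suc 0) = Ln i"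
  using LL_nth by simp

lemma length_LL: "length LL = length R" by (simp add: LL_def)

definition "FJ J = (\<Prod>k=1..d. ((nk n d k - (\<Sum>i\<in>J k. LL ! (i - 1))) choose card (J k)) * fact (card (J k)))"

lemma q_nd_eq: "q_nd n d LL = sum FJ QJ0"
proof -
  have I': "{1..length LL} = I" by (simp add: I_def length_LL)
  have "q_nd n d LL = sum FJ {J \<in> QJ0. \<forall>k\<in>{1..d}. (\<Sum>i\<in>J k. LL ! (i - 1)) \<le> nk n d k}"
    unfolding q_nd_def FJ_def QJ0_def I' by (rule sum.cong) auto
  also have "\<dots> = sum FJ QJ0"
  proof (rule sum.mono_neutral_left)
    show "finite QJ0" unfolding QJ0_def by (rule finite_subset[of _ "PiE {1..d} (\<lambda>k. Pow I)"]) (auto intro!: finite_PiE finite_I)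
    show "{J \<in> QJ0. \<forall>k\<in>{1..d}. (\<Sum>i\<in>J k. LL ! (i - 1)) \<le> nk n d k} \<subseteq> QJ0" by auto
    show "\<forall>J\<in>QJ0 - {J \<in> QJ0. \<forall>k\<in>{1..d}. (\<Sum>i\<in>J k. LL ! (i - 1)) \<le> nk n d k}. FJ J = 0"
    proof
      fix J assume "J \<in> QJ0 - {J \<in> QJ0. \<forall>k\<in>{1..d}. (\<Sum>i\<in>J k. LL ! (i - 1)) \<le> nk n d k}"
      then obtain k where J: "J \<in> QJ0" and k: "k \<in> {1..d}" "\<not> (\<Sum>i\<in>J k. LL ! (i - 1)) \<le> nk n d k" by auto
      have "J k \<subseteq> I" using J k by (auto simp: QJ0_def PiE_iff)
      then have fin: "finite (J k)" using finite_I by (rule finite_subset)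
      have "J k \<noteq> {}" using k by auto
      then have "card (J k) > 0" using fin by (simp add: card_gt_0_iff)
      then have z: "((nk n d k - (\<Sum>i\<in>J k. LL ! (i - 1))) choose card (J k)) = 0" using k by simp
      have "\<exists>a\<in>{1..d}. ((nk n d a - (\<Sum>i\<in>J a. LL ! (i - 1))) choose card (J a)) * fact (card (J a)) = 0"
        using k z by (intro bexI[of _ k]) simp_all
      then show "FJ J = 0" unfolding FJ_def by (rule prod_zero[rotated]) simp
    qed
  qed
  finally show ?thesis .
qed

lemma step7: "(\<Sum>a\<in>PiE I (\<lambda>_. {1..d}). \<Prod>k\<in>{1..d}. card (plc (m k) (Jof a k) Ln)) = q_nd n d LL"
proof -
  have "(\<Sum>a\<in>PiE I (\<lambda>_. {1..d}). \<Prod>k\<in>{1..d}. card (plc (m k) (Jof a k) Ln)) =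
        (\<Sum>a\<in>PiE I (\<lambda>_. {1..d}). FJ (part a))"
  proof (rule sum.cong[OF refl])
    fix a assume a: "a \<in> PiE I (\<lambda>_. {1..d})"
    show "(\<Prod>k\<in>{1..d}. card (plc (m k) (Jof a k) Ln)) = FJ (part a)"
      unfolding FJ_def
    proof (rule prod.cong[OF refl])
      fix k assume k: "k \<in> {1..d}"
      have fin: "finite (Jof a k)" using finite_I by (simp add: Jof_def)
      have "(\<Sum>i\<in>Jof a k. LL ! (i - 1)) = sum Ln (Jof a k)"
        by (rule sum.cong) (auto simp: Jof_def LL_nth')
      then show "card (plc (m k) (Jof a k) Ln) =
          ((nk n d k - (\<Sum>i\<in>part a k. LL ! (i - 1))) choose card (part a k)) * fact (card (part a k))"
        using card_plc[OF fin] k by (simp add: part_def m_def)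
    qed
  qed
  also have "\<dots> = sum FJ QJ0" using part_bij by (rule sum.reindex_bij_betw)
  also have "\<dots> = q_nd n d LL" by (rule q_nd_eq[symmetric])
  finally show ?thesis .
qed

theorem T7: "card {pm. pm permutes {1..n} \<and> cpt pm} =
   2 ^ length LL * fact (n - (sum_list LL + length LL)) * q_nd n d LL"
proof -
  have sl: "sum Ln I = sum_list LL"
  proof -
    have "sum_list LL = (\<Sum>i<length LL. LL ! i)" by (rule sum_list_sum_nth[unfolded atLeast0LessThan])
    also have "\<dots> = (\<Sum>i\<in>I. LL ! (i - 1))"
      by (rule sum.reindex_bij_witness[of _ "\<lambda>i. i - 1" "\<lambda>i. i + 1"]) (auto simp: I_def length_LL)
    also have "\<dots> = sum Ln I" by (rule sum.cong) (auto simp: LL_nth')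
    finally show ?thesis by simp
  qed
  show ?thesis using step4 step5 step6 step7 sl length_LL by simp
qed

end

lemma sum_list_concat': "sum_list (concat xss) = sum_list (map sum_list (xss :: nat list list))"
  by (induction xss) auto

lemma sorted_wrt_distinct_irr:
  assumes "sorted_wrt Q xs" "\<And>x. \<not> Q x x"
  shows "distinct xs"
  using assms by (induction xs) auto

lemma sorted_wrt_pair:
  assumes "sorted_wrt Q xs" "a \<in> set xs" "b \<in> set xs" "a \<noteq> b"
  shows "Q a b \<or> Q b a"
proof -
  obtain i j where ij: "i < length xs" "j < length xs" "xs ! i = a" "xs ! j = b"
    using assms by (auto simp: in_set_conv_nth)
  then have "i \<noteq> j" using assms by auto
  then show ?thesis using sorted_wrt_nth_less[OF assms(1)] ij by (cases "i < j") auto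
qed

lemma group_PiE:
  fixes h :: "('k \<Rightarrow> 'b) \<Rightarrow> int"
  assumes K: "finite K" and A: "\<And>k. k \<in> K \<Longrightarrow> finite (A k)" and T: "\<And>k. k \<in> K \<Longrightarrow> finite (T k)"
    and fT: "\<And>k a. k \<in> K \<Longrightarrow> a \<in> A k \<Longrightarrow> f k a \<in> T k"
  shows "(\<Sum>b\<in>PiE K A. h (restrict (\<lambda>k. f k (b k)) K)) =
         (\<Sum>ls\<in>PiE K T. int (\<Prod>k\<in>K. card {a \<in> A k. f k a = ls k}) * h ls)"
proof -
  let ?F = "\<lambda>b. restrict (\<lambda>k. f k (b k)) K"
  have fin1: "finite (PiE K A)" using K A by (intro finite_PiE) auto
  have fin2: "finite (PiE K T)" using K T by (intro finite_PiE) auto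
  have sub: "?F ` PiE K A \<subseteq> PiE K T" using fT by (auto simp: PiE_iff)
  have "(\<Sum>b\<in>PiE K A. h (?F b)) = (\<Sum>ls\<in>PiE K T. \<Sum>b\<in>{b. b \<in> PiE K A \<and> ?F b = ls}. h (?F b))"
    by (rule sum.group[OF fin1 fin2 sub, symmetric])
  also have "\<dots> = (\<Sum>ls\<in>PiE K T. int (\<Prod>k\<in>K. card {a \<in> A k. f k a = ls k}) * h ls)"
  proof (rule sum.cong[OF refl])
    fix ls assume ls: "ls \<in> PiE K T"
    have eq: "{b. b \<in> PiE K A \<and> ?F b = ls} = PiE K (\<lambda>k. {a \<in> A k. f k a = ls k})"
    proof (intro equalityI subsetI)
      fix b assume "b \<in> {b. b \<in> PiE K A \<and> ?F b = ls}"
      then have b: "b \<in> PiE K A" "?F b = ls" by auto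
      have "f k (b k) = ls k" if "k \<in> K" for k using fun_cong[OF b(2), of k] that by simp
      then show "b \<in> PiE K (\<lambda>k. {a \<in> A k. f k a = ls k})" using b(1) by (auto simp: PiE_iff)
    next
      fix b assume b: "b \<in> PiE K (\<lambda>k. {a \<in> A k. f k a = ls k})"
      then have "b \<in> PiE K A" by (auto simp: PiE_iff)
      moreover have "?F b = ls"
      proof
        fix k show "?F b k = ls k" using b ls by (cases "k \<in> K") (auto simp: PiE_iff extensional_def)
      qed
      ultimately show "b \<in> {b. b \<in> PiE K A \<and> ?F b = ls}" by simp
    qed
    have "(\<Sum>b\<in>{b. b \<in> PiE K A \<and> ?F b = ls}. h (?F b)) = (\<Sum>b\<in>{b. b \<in> PiE K A \<and> ?F b = ls}. h ls)"
      by (rule sum.cong) auto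
    also have "\<dots> = int (card {b. b \<in> PiE K A \<and> ?F b = ls}) * h ls" by simp
    also have "card {b. b \<in> PiE K A \<and> ?F b = ls} = (\<Prod>k\<in>K. card {a \<in> A k. f k a = ls k})"
      unfolding eq by (rule card_PiE[OF K])
    finally show "(\<Sum>b\<in>{b. b \<in> PiE K A \<and> ?F b = ls}. h (?F b)) = int (\<Prod>k\<in>K. card {a \<in> A k. f k a = ls k}) * h ls" .
  qed
  finally show ?thesis .
qed

lemma length_le_sum_list: "\<forall>x\<in>set ls. 1 \<le> x \<Longrightarrow> length ls \<le> sum_list (ls :: nat list)"
  by (induction ls) auto

definition Comp :: "nat \<Rightarrow> nat list set" where
  "Comp M = {ls. (\<forall>x\<in>set ls. 1 \<le> x) \<and> sum_list ls < M}"

lemma finite_compositions: "finite (compositions r c)"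
proof -
  have "compositions r c \<subseteq> {ls. set ls \<subseteq> {0..r} \<and> length ls = c}"
    unfolding compositions_def by (auto simp: member_le_sum_list)
  then show ?thesis by (rule finite_subset) (rule finite_lists_length_eq, simp)
qed

lemma reindex_triple:
  fixes Tf :: "('a \<Rightarrow> nat) \<Rightarrow> ('a \<Rightarrow> nat) \<Rightarrow> ('a \<Rightarrow> nat list) \<Rightarrow> int" and K :: "'a set"
  assumes K: "finite K"
  shows "(\<Sum>r \<in> PiE K (\<lambda>k. {0..<M k}). \<Sum>c \<in> PiE K (\<lambda>k. {0..r k}). \<Sum>ls \<in> PiE K (\<lambda>k. compositions (r k) (c k)). Tf r c ls)
    = (\<Sum>ls \<in> PiE K (\<lambda>k. Comp (M k)). Tf (restrict (\<lambda>k. sum_list (ls k)) K) (restrict (\<lambda>k. length (ls k)) K) ls)"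
proof -
  have f1: "finite (PiE K (\<lambda>k. {0..<M k}))" using K by (intro finite_PiE) auto
  have f2: "finite (PiE K (\<lambda>k. {0..r k}))" for r :: "'a \<Rightarrow> nat" using K by (intro finite_PiE) auto
  have f3: "finite (PiE K (\<lambda>k. compositions (r k) (c k)))" for r c :: "'a \<Rightarrow> nat" using K by (intro finite_PiE finite_compositions)
  have "(\<Sum>r \<in> PiE K (\<lambda>k. {0..<M k}). \<Sum>c \<in> PiE K (\<lambda>k. {0..r k}). \<Sum>ls \<in> PiE K (\<lambda>k. compositions (r k) (c k)). Tf r c ls)
     = (\<Sum>r \<in> PiE K (\<lambda>k. {0..<M k}). \<Sum>(c, ls) \<in> Sigma (PiE K (\<lambda>k. {0..r k})) (\<lambda>c. PiE K (\<lambda>k. compositions (r k) (c k))). Tf r c ls)"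
    using f2 f3 by (intro sum.cong refl sum.Sigma) auto
  also have "\<dots> = (\<Sum>(r, cl) \<in> Sigma (PiE K (\<lambda>k. {0..<M k})) (\<lambda>r. Sigma (PiE K (\<lambda>k. {0..r k})) (\<lambda>c. PiE K (\<lambda>k. compositions (r k) (c k)))). (case cl of (c, ls) \<Rightarrow> Tf r c ls))"
    using f1 f2 f3 by (intro sum.Sigma) (auto intro!: finite_SigmaI)
  also have "\<dots> = (\<Sum>ls \<in> PiE K (\<lambda>k. Comp (M k)). Tf (restrict (\<lambda>k. sum_list (ls k)) K) (restrict (\<lambda>k. length (ls k)) K) ls)"
  proof -
    let ?S = "Sigma (PiE K (\<lambda>k. {0..<M k})) (\<lambda>r. Sigma (PiE K (\<lambda>k. {0..r k})) (\<lambda>c. PiE K (\<lambda>k. compositions (r k) (c k))))"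
    let ?f = "\<lambda>ls. (restrict (\<lambda>k. sum_list (ls k)) K, restrict (\<lambda>k. length (ls k)) K, ls)"
    have key: "?f ls = a" if a: "a \<in> ?S" and "ls = snd (snd a)" for a ls
    proof -
      obtain r c ls' where acl: "a = (r, c, ls')" by (cases a) auto
      have r: "r \<in> PiE K (\<lambda>k. {0..<M k})" and c: "c \<in> PiE K (\<lambda>k. {0..r k})"
        and ls: "ls' \<in> PiE K (\<lambda>k. compositions (r k) (c k))" using a acl by auto
      have sr: "restrict (\<lambda>k. sum_list (ls' k)) K = r"
      proof
        fix k show "restrict (\<lambda>k. sum_list (ls' k)) K k = r k"
          using r ls by (cases "k \<in> K") (auto simp: PiE_iff compositions_def extensional_def)
      qed
      have lc: "restrict (\<lambda>k. length (ls' k)) K = c"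
      proof
        fix k show "restrict (\<lambda>k. length (ls' k)) K k = c k"
          using c ls by (cases "k \<in> K") (auto simp: PiE_iff compositions_def extensional_def)
      qed
      show ?thesis using sr lc acl that(2) by simp
    qed
    have "bij_betw ?f (PiE K (\<lambda>k. Comp (M k))) ?S"
    proof (rule bij_betw_byWitness[where f' = "\<lambda>a. snd (snd a)"])
      show "\<forall>a\<in>PiE K (\<lambda>k. Comp (M k)). snd (snd (?f a)) = a" by simp
      show "\<forall>a'\<in>?S. ?f (snd (snd a')) = a'" using key by blast
      show "?f ` PiE K (\<lambda>k. Comp (M k)) \<subseteq> ?S"
      proof
        fix x assume "x \<in> ?f ` PiE K (\<lambda>k. Comp (M k))"
        then obtain ls where ls: "ls \<in> PiE K (\<lambda>k. Comp (M k))" "x = ?f ls" by blast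
        have "length (ls k) \<le> sum_list (ls k)" if "k \<in> K" for k
          using ls that length_le_sum_list by (auto simp: PiE_iff Comp_def)
        then show "x \<in> ?S" using ls by (auto simp: PiE_iff Comp_def compositions_def)
      qed
      show "(\<lambda>a. snd (snd a)) ` ?S \<subseteq> PiE K (\<lambda>k. Comp (M k))"
        by (auto simp: PiE_iff compositions_def Comp_def)
    qed
    then have "(\<Sum>x\<in>PiE K (\<lambda>k. Comp (M k)). (\<lambda>(r, cl). case cl of (c, ls) \<Rightarrow> Tf r c ls) (?f x)) =
        (\<Sum>x\<in>?S. (\<lambda>(r, cl). case cl of (c, ls) \<Rightarrow> Tf r c ls) x)"
      by (rule sum.reindex_bij_betw)
    then show ?thesis by simp
  qed
  finally show ?thesis .
qed

context chn
begin

definition "E = {i. 1 \<le> i \<and> i + d \<le> n}"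
definition "NS S = card {pm. pm permutes {1..n} \<and> (\<forall>i\<in>S. \<bar>int (pm (i + d)) - int (pm i)\<bar> = int d)}"

lemma finite_E: "finite E" unfolding E_def by (rule finite_subset[of _ "{..n}"]) auto

lemma IE: "int (a_seq n d) = (\<Sum>S\<in>Pow E. (-1) ^ card S * int (NS S))"
proof -
  define P where "P = {pm. pm permutes {1..n}}"
  define bad where "bad pm = {i\<in>E. \<bar>int (pm (i + d)) - int (pm i)\<bar> = int d}" for pm :: "nat \<Rightarrow> nat"
  have finP: "finite P" unfolding P_def by (rule finite_permutations) simp
  have badE: "bad pm \<subseteq> E" for pm unfolding bad_def by auto
  have "a_seq n d = card {pm \<in> P. bad pm = {}}"
    unfolding a_seq_def P_def bad_def E_def by (rule arg_cong[where f = card]) auto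
  then have "int (a_seq n d) = (\<Sum>pm\<in>P. if bad pm = {} then 1 else 0)"
    using finP by (simp add: sum.inter_filter[symmetric])
  also have "\<dots> = (\<Sum>pm\<in>P. \<Sum>S\<in>Pow (bad pm). (-1::int) ^ card S)"
    by (intro sum.cong refl) (simp add: alt_sum_Pow[OF finite_subset[OF badE finite_E]])
  also have "\<dots> = (\<Sum>pm\<in>P. \<Sum>S\<in>Pow E. if S \<subseteq> bad pm then (-1::int) ^ card S else 0)"
  proof (rule sum.cong[OF refl])
    fix pm
    have "{S \<in> Pow E. S \<subseteq> bad pm} = Pow (bad pm)" using badE by auto
    then show "(\<Sum>S\<in>Pow (bad pm). (-1::int) ^ card S) = (\<Sum>S\<in>Pow E. if S \<subseteq> bad pm then (-1::int) ^ card S else 0)"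
      using finite_E by (simp add: sum.inter_filter[symmetric])
  qed
  also have "\<dots> = (\<Sum>S\<in>Pow E. \<Sum>pm\<in>P. if S \<subseteq> bad pm then (-1::int) ^ card S else 0)"
    by (rule sum.swap)
  also have "\<dots> = (\<Sum>S\<in>Pow E. (-1) ^ card S * int (NS S))"
  proof (rule sum.cong[OF refl])
    fix S assume S: "S \<in> Pow E"
    have "{pm \<in> P. S \<subseteq> bad pm} = {pm. pm permutes {1..n} \<and> (\<forall>i\<in>S. \<bar>int (pm (i + d)) - int (pm i)\<bar> = int d)}"
      using S unfolding P_def bad_def by auto
    then have "(\<Sum>pm\<in>P. if S \<subseteq> bad pm then (-1::int) ^ card S else 0) = int (NS S) * (-1) ^ card S"
      unfolding NS_def using finP by (simp add: sum.inter_filter[symmetric])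
    then show "(\<Sum>pm\<in>P. if S \<subseteq> bad pm then (-1::int) ^ card S else 0) = (-1) ^ card S * int (NS S)"
      by simp
  qed
  finally show ?thesis .
qed

definition "BL k = {bs :: bool list. length bs = m k - 1}"
definition "Sof b = {ph k j | k j. k \<in> {1..d} \<and> j < length (b k) \<and> b k ! j}"

lemma Sof_bij: "bij_betw Sof (PiE {1..d} BL) (Pow E)"
proof -
  let ?g = "\<lambda>S. \<lambda>k\<in>{1..d}. map (\<lambda>j. ph k j \<in> S) [0..<m k - 1]"
  show ?thesis
  proof (rule bij_betw_byWitness[where f' = ?g])
    show "\<forall>b\<in>PiE {1..d} BL. ?g (Sof b) = b"
    proof
      fix b assume b: "b \<in> PiE {1..d} BL"
      show "?g (Sof b) = b"
      proof
        fix k show "?g (Sof b) k = b k"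
        proof (cases "k \<in> {1..d}")
          case True
          have len: "length (b k) = m k - 1" using b True by (auto simp: PiE_iff BL_def)
          have "(ph k j \<in> Sof b) = b k ! j" if "j < m k - 1" for j
          proof
            assume "ph k j \<in> Sof b"
            then obtain k' j' where "k' \<in> {1..d}" "j' < length (b k')" "b k' ! j'" "ph k j = ph k' j'"
              unfolding Sof_def by blast
            then show "b k ! j" using ph_inj[OF True] by auto
          next
            assume bj: "b k ! j"
            have "j < length (b k)" using that len by simp
            then show "ph k j \<in> Sof b" unfolding Sof_def using True bj by blast
          qed
          then show ?thesis using True len by (auto intro: nth_equalityI)
        next
          case False then show ?thesis using b by (auto simp: PiE_iff extensional_def)
        qed
      qed
    qed
    show "\<forall>S\<in>Pow E. Sof (?g S) = S"
    proof
      fix S assume S: "S \<in> Pow E"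
      show "Sof (?g S) = S"
      proof (intro equalityI subsetI)
        fix x assume "x \<in> Sof (?g S)"
        then obtain k j where "k \<in> {1..d}" "j < length (?g S k)" "?g S k ! j" "x = ph k j"
          unfolding Sof_def by blast
        then show "x \<in> S" by simp
      next
        fix x assume x: "x \<in> S"
        then have xE: "1 \<le> x" "x + d \<le> n" using S E_def by auto
        then have "x \<in> {1..n}" using d1 by auto
        then obtain k j where kj: "k \<in> {1..d}" "j < m k" "x = ph k j" using decode by blast
        have "ph k (Suc j) \<le> n" using xE kj by (simp add: ph_Suc)
        then have "Suc j < m k" using m_iff[OF kj(1)] by simp
        then have "j < length (?g S k)" "?g S k ! j" using kj x by auto
        then show "x \<in> Sof (?g S)" unfolding Sof_def using kj by blast
      qed
    qed
    show "Sof ` PiE {1..d} BL \<subseteq> Pow E"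
    proof
      fix S assume "S \<in> Sof ` PiE {1..d} BL"
      then obtain b where b: "b \<in> PiE {1..d} BL" "S = Sof b" by blast
      show "S \<in> Pow E"
      proof (rule PowI, rule subsetI)
        fix x assume "x \<in> S"
        then obtain k j where kj: "k \<in> {1..d}" "j < length (b k)" "x = ph k j" using b unfolding Sof_def by blast
        then have "Suc j < m k" using b by (auto simp: PiE_iff BL_def)
        then have "ph k (Suc j) \<le> n" using m_iff[OF kj(1)] by simp
        then show "x \<in> E" using kj ph_pos unfolding E_def by (simp add: ph_Suc)
      qed
    qed
    show "?g ` Pow E \<subseteq> PiE {1..d} BL" by (auto simp: BL_def)
  qed
qed


definition "Rof b = concat (map (\<lambda>k. map (\<lambda>(x,l). (k,x,l)) (runs 0 (b k))) [1..<d+1])"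

lemma set_Rof: "set (Rof b) = {(k,x,l). k \<in> {1..d} \<and> (x,l) \<in> set (runs 0 (b k))}"
  unfolding Rof_def by auto

lemma distinct_concat_tag:
  assumes "distinct ks" "\<And>k. distinct (xs k)"
  shows "distinct (concat (map (\<lambda>k. map (\<lambda>(x,l). (k::nat, x::nat, l::nat)) (xs k)) ks))"
  using assms(1)
proof (induction ks)
  case (Cons k ks)
  have "distinct (map (\<lambda>(x,l). (k, x, l)) (xs k))"
    using assms(2)[of k] by (simp add: distinct_map inj_on_def)
  then show ?case using Cons by auto
qed simp

lemma rc_Rof:
  assumes b: "b \<in> PiE {1..d} BL"
  shows "rc n d (Rof b)"
proof -
  have len: "length (b k) = m k - 1" if "k \<in> {1..d}" for k using b that by (auto simp: PiE_iff BL_def)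
  have srt: "sorted_wrt (\<lambda>(x,l) (x',l'). x + l < x') (runs 0 (b k))" for k by (rule runs_sorted)
  have "\<forall>(k,x,l)\<in>set (Rof b). k \<in> {1..d} \<and> 1 \<le> l \<and> x + l < m k"
  proof (clarify)
    fix k x l assume "(k,x,l) \<in> set (Rof b)"
    then have k: "k \<in> {1..d}" and xl: "(x,l) \<in> set (runs 0 (b k))" unfolding set_Rof by auto
    have "1 \<le> l \<and> x + l \<le> length (b k)" using runs_bounds[OF xl] by simp
    moreover have "1 \<le> m k" using m_pos[OF k] .
    ultimately show "k \<in> {1..d} \<and> 1 \<le> l \<and> x + l < m k" using k len[OF k] by auto
  qed
  moreover have "distinct (Rof b)" unfolding Rof_def
    by (rule distinct_concat_tag) (auto intro: sorted_wrt_distinct_irr[OF srt])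
  moreover have "\<forall>a\<in>set (Rof b). \<forall>c\<in>set (Rof b). a \<noteq> c \<longrightarrow> fst a = fst c \<longrightarrow>
        {fst (snd a)..fst (snd a) + snd (snd a)} \<inter> {fst (snd c)..fst (snd c) + snd (snd c)} = {}"
  proof (intro ballI impI)
    fix a c assume ac: "a \<in> set (Rof b)" "c \<in> set (Rof b)" "a \<noteq> c" "fst a = fst c"
    obtain k x l where a: "a = (k,x,l)" by (cases a) auto
    obtain k' x' l' where c: "c = (k',x',l')" by (cases c) auto
    have "k = k'" using ac a c by simp
    then have xl: "(x,l) \<in> set (runs 0 (b k))" "(x',l') \<in> set (runs 0 (b k))" "(x,l) \<noteq> (x',l')"
      using ac a c unfolding set_Rof by auto
    have "x + l < x' \<or> x' + l' < x" using sorted_wrt_pair[OF srt xl] by auto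
    then show "{fst (snd a)..fst (snd a) + snd (snd a)} \<inter> {fst (snd c)..fst (snd c) + snd (snd c)} = {}"
      using a c by auto
  qed
  ultimately show ?thesis unfolding rc_def rc_axioms_def using chn_axioms by blast
qed

lemma runs_cover0: "{j. j < length bs \<and> bs ! j} = (\<Union>(x,l)\<in>set (runs 0 bs). {x..<x+l})"
  using runs_cover[of 0 bs] by simp

lemma cpt_Rof:
  assumes b: "b \<in> PiE {1..d} BL"
  shows "rc.SR d (Rof b) = Sof b"
proof -
  interpret r: rc n d "Rof b" by (rule rc_Rof[OF b])
  have "r.SR = {ph k j | k x l j. (k,x,l) \<in> set (Rof b) \<and> x \<le> j \<and> j < x + l}"
  proof (intro equalityI subsetI)
    fix e assume "e \<in> r.SR"
    then obtain i j where ij: "i \<in> r.I" "r.X i \<le> j" "j < r.X i + r.Ln i" "e = ph (r.K i) j"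
      unfolding r.SR_def by blast
    have "Rof b ! (i - 1) \<in> set (Rof b)" using ij(1) by (auto simp: r.I_def)
    then have "(r.K i, r.X i, r.Ln i) \<in> set (Rof b)" unfolding r.K_def r.X_def r.Ln_def by simp
    then show "e \<in> {ph k j | k x l j. (k,x,l) \<in> set (Rof b) \<and> x \<le> j \<and> j < x + l}" using ij by blast
  next
    fix e assume "e \<in> {ph k j | k x l j. (k,x,l) \<in> set (Rof b) \<and> x \<le> j \<and> j < x + l}"
    then obtain k x l j where kx: "(k,x,l) \<in> set (Rof b)" "x \<le> j" "j < x + l" "e = ph k j" by blast
    then obtain i where i: "i < length (Rof b)" "Rof b ! i = (k,x,l)" by (auto simp: in_set_conv_nth)
    have "Suc i \<in> r.I" "r.K (Suc i) = k" "r.X (Suc i) = x" "r.Ln (Suc i) = l"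
      using i unfolding r.I_def r.K_def r.X_def r.Ln_def by auto
    then show "e \<in> r.SR" unfolding r.SR_def using kx by blast
  qed
  also have "\<dots> = Sof b"
  proof (intro equalityI subsetI)
    fix e assume "e \<in> {ph k j | k x l j. (k,x,l) \<in> set (Rof b) \<and> x \<le> j \<and> j < x + l}"
    then obtain k x l j where kx: "(k,x,l) \<in> set (Rof b)" "x \<le> j" "j < x + l" "e = ph k j" by blast
    then have k: "k \<in> {1..d}" and xl: "(x,l) \<in> set (runs 0 (b k))" unfolding set_Rof by auto
    have "j \<in> (\<Union>(x,l)\<in>set (runs 0 (b k)). {x..<x+l})" using xl kx by force
    then have "j \<in> {j. j < length (b k) \<and> b k ! j}" unfolding runs_cover0 .
    then show "e \<in> Sof b" unfolding Sof_def using k kx by auto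
  next
    fix e assume "e \<in> Sof b"
    then obtain k j where kj: "k \<in> {1..d}" "j < length (b k)" "b k ! j" "e = ph k j" unfolding Sof_def by blast
    then have "j \<in> {j. j < length (b k) \<and> b k ! j}" by simp
    then have "j \<in> (\<Union>(x,l)\<in>set (runs 0 (b k)). {x..<x+l})" unfolding runs_cover0 .
    then obtain x l where "(x,l) \<in> set (runs 0 (b k))" "x \<le> j" "j < x + l" by auto
    then show "e \<in> {ph k j | k x l j. (k,x,l) \<in> set (Rof b) \<and> x \<le> j \<and> j < x + l}"
      using kj unfolding set_Rof by blast
  qed
  finally show ?thesis .
qed

lemma LL_Rof:
  assumes b: "b \<in> PiE {1..d} BL"
  shows "rc.LL (Rof b) = concat (map (\<lambda>k. cmp (b k)) [1..<d+1])"
proof -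
  have "map (\<lambda>x. snd (snd x)) (Rof b) = concat (map (\<lambda>k. map snd (runs 0 (b k))) [1..<d+1])"
    unfolding Rof_def map_concat by (simp add: o_def case_prod_beta)
  then show ?thesis unfolding rc.LL_def[OF rc_Rof[OF b]] by (simp add: runs_cmp)
qed

lemma card_Sof:
  assumes b: "b \<in> PiE {1..d} BL"
  shows "card (Sof b) = sum_list (concat (map (\<lambda>k. cmp (b k)) [1..<d+1]))"
proof -
  have "Sof b = (\<Union>k\<in>{1..d}. ph k ` {j. j < length (b k) \<and> b k ! j})" unfolding Sof_def by blast
  then have "card (Sof b) = (\<Sum>k\<in>{1..d}. card (ph k ` {j. j < length (b k) \<and> b k ! j}))"
    using ph_inj by (simp, intro card_UN_disjoint) auto
  also have "\<dots> = (\<Sum>k\<in>{1..d}. sum_list (cmp (b k)))"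
  proof (rule sum.cong[OF refl])
    fix k assume k: "k \<in> {1..d}"
    have "inj_on (ph k) {j. j < length (b k) \<and> b k ! j}" using ph_inj[OF k k] by (auto intro: inj_onI)
    then show "card (ph k ` {j. j < length (b k) \<and> b k ! j}) = sum_list (cmp (b k))"
      by (simp add: card_image runs_count)
  qed
  also have "\<dots> = sum_list (map (\<lambda>k. sum_list (cmp (b k))) [1..<d+1])"
    by (metis sum_set_upt_conv_sum_list_nat atLeastLessThanSuc_atLeastAtMost set_upt Suc_eq_plus1)
  also have "\<dots> = sum_list (concat (map (\<lambda>k. cmp (b k)) [1..<d+1]))"
    by (simp add: sum_list_concat' o_def)
  finally show ?thesis .
qed

end

lemma finite_Comp: "finite (Comp M)"
proof -
  have "Comp M \<subseteq> {xs. set xs \<subseteq> {0..M} \<and> length xs \<le> M}"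
  proof
    fix ls assume "ls \<in> Comp M"
    then have ls: "\<forall>x\<in>set ls. 1 \<le> x" "sum_list ls < M" by (auto simp: Comp_def)
    have "length ls \<le> M" using length_le_sum_list[OF ls(1)] ls(2) by simp
    moreover have "set ls \<subseteq> {0..M}" using ls(2) member_le_sum_list[of _ ls] by fastforce
    ultimately show "ls \<in> {xs. set xs \<subseteq> {0..M} \<and> length xs \<le> M}" by simp
  qed
  then show ?thesis by (rule finite_subset) (rule finite_lists_length_le, simp)
qed

lemma sum_upt_list: "(\<Sum>k=1..d. f k) = sum_list (map f [1..<d+1])"
  by (metis sum_set_upt_conv_sum_list_nat atLeastLessThanSuc_atLeastAtMost set_upt Suc_eq_plus1)

context chn
begin

lemma NS_b:
  assumes b: "b \<in> PiE {1..d} BL"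
  defines "LLb \<equiv> concat (map (\<lambda>k. cmp (b k)) [1..<d+1])"
  shows "NS (Sof b) = 2 ^ length LLb * fact (n - (sum_list LLb + length LLb)) * q_nd n d LLb"
proof -
  interpret r: rc n d "Rof b" by (rule rc_Rof[OF b])
  have "r.SR = Sof b" using cpt_Rof[OF b] .
  then have "NS (Sof b) = card {pm. pm permutes {1..n} \<and> r.cpt pm}"
    unfolding NS_def r.cpt_def by simp
  also have "\<dots> = 2 ^ length r.LL * fact (n - (sum_list r.LL + length r.LL)) * q_nd n d r.LL"
    by (rule r.T7)
  also have "r.LL = LLb" unfolding LLb_def using LL_Rof[OF b] .
  finally show ?thesis .
qed

definition "HH ls = (let L = concat (map ls [1..<d+1]) in
   (-1::int) ^ sum_list L * int (2 ^ length L * fact (n - (sum_list L + length L)) * q_nd n d L))"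

lemma step_b:
  "(\<Sum>S\<in>Pow E. (-1) ^ card S * int (NS S)) = (\<Sum>b\<in>PiE {1..d} BL. HH (restrict (\<lambda>k. cmp (b k)) {1..d}))"
proof -
  have "(\<Sum>S\<in>Pow E. (-1) ^ card S * int (NS S)) = (\<Sum>b\<in>PiE {1..d} BL. (-1) ^ card (Sof b) * int (NS (Sof b)))"
    using sum.reindex_bij_betw[OF Sof_bij, of "\<lambda>S. (-1) ^ card S * int (NS S)"] by simp
  also have "\<dots> = (\<Sum>b\<in>PiE {1..d} BL. HH (restrict (\<lambda>k. cmp (b k)) {1..d}))"
  proof (rule sum.cong[OF refl])
    fix b assume b: "b \<in> PiE {1..d} BL"
    have meq: "map (restrict (\<lambda>k. cmp (b k)) {1..d}) [1..<d+1] = map (\<lambda>k. cmp (b k)) [1..<d+1]"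
      by (rule map_cong) auto
    show "(-1) ^ card (Sof b) * int (NS (Sof b)) = HH (restrict (\<lambda>k. cmp (b k)) {1..d})"
      unfolding HH_def Let_def meq NS_b[OF b] card_Sof[OF b] by simp
  qed
  finally show ?thesis .
qed

lemma step_group:
  "(\<Sum>b\<in>PiE {1..d} BL. HH (restrict (\<lambda>k. cmp (b k)) {1..d})) =
   (\<Sum>ls\<in>PiE {1..d} (\<lambda>k. Comp (m k)). int (\<Prod>k\<in>{1..d}. (m k - sum_list (ls k)) choose length (ls k)) * HH ls)"
proof -
  have "(\<Sum>b\<in>PiE {1..d} BL. HH (restrict (\<lambda>k. cmp (b k)) {1..d})) =
     (\<Sum>ls\<in>PiE {1..d} (\<lambda>k. Comp (m k)). int (\<Prod>k\<in>{1..d}. card {a \<in> BL k. cmp a = ls k}) * HH ls)"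
  proof (rule group_PiE)
    show "finite {1..d}" by simp
    show "finite (BL k)" for k unfolding BL_def by (rule finite_bool_lists)
    show "finite (Comp (m k))" for k by (rule finite_Comp)
    fix k a assume k: "k \<in> {1..d}" and a: "a \<in> BL k"
    have "sum_list (cmp a) \<le> length a"
      using runs_count[of a] card_mono[of "{..<length a}" "{j. j < length a \<and> a ! j}"] by auto
    then have "sum_list (cmp a) < m k" using a m_pos[OF k] by (auto simp: BL_def)
    then show "cmp a \<in> Comp (m k)" using cmp_pos by (auto simp: Comp_def)
  qed
  also have "\<dots> = (\<Sum>ls\<in>PiE {1..d} (\<lambda>k. Comp (m k)). int (\<Prod>k\<in>{1..d}. (m k - sum_list (ls k)) choose length (ls k)) * HH ls)"
  proof (rule sum.cong[OF refl])
    fix ls assume ls: "ls \<in> PiE {1..d} (\<lambda>k. Comp (m k))"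
    have "card {a \<in> BL k. cmp a = ls k} = (m k - sum_list (ls k)) choose length (ls k)" if k: "k \<in> {1..d}" for k
    proof -
      have "{a \<in> BL k. cmp a = ls k} = fib (m k - 1) (ls k)" by (auto simp: BL_def fib_def)
      moreover have "ls k \<in> Comp (m k)" using PiE_mem[OF ls k] .
      then have "\<forall>x\<in>set (ls k). 1 \<le> x" unfolding Comp_def by blast
      moreover have "Suc (m k - 1) = m k" using m_pos[OF k] by simp
      ultimately show ?thesis using card_fib[of "ls k" "m k - 1"] by simp
    qed
    then show "int (\<Prod>k\<in>{1..d}. card {a \<in> BL k. cmp a = ls k}) * HH ls =
        int (\<Prod>k\<in>{1..d}. (m k - sum_list (ls k)) choose length (ls k)) * HH ls" by simp
  qed
  finally show ?thesis .
qed

lemma main_chn: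
  "int (a_seq n d) =
    (\<Sum>r \<in> PiE {1..d} (\<lambda>k. {0..<nk n d k}). \<Sum>c \<in> PiE {1..d} (\<lambda>k. {0..r k}).
       (-1) ^ (\<Sum>k=1..d. r k) * 2 ^ (\<Sum>k=1..d. c k)
       * int (fact (n - (\<Sum>k=1..d. r k) - (\<Sum>k=1..d. c k)))
       * (\<Prod>k=1..d. int ((nk n d k - r k) choose c k))
       * (\<Sum>ls \<in> PiE {1..d} (\<lambda>k. compositions (r k) (c k)).
            int (q_nd n d (concat (map ls [1..<d+1])))))"
proof -
  define W where "W r c = (-1) ^ (\<Sum>k=1..d. r k) * 2 ^ (\<Sum>k=1..d. c k)
       * int (fact (n - (\<Sum>k=1..d. r k) - (\<Sum>k=1..d. c k)))
       * (\<Prod>k=1..d. int ((nk n d k - r k) choose c k))" for r c :: "nat \<Rightarrow> nat"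
  have "(\<Sum>r \<in> PiE {1..d} (\<lambda>k. {0..<nk n d k}). \<Sum>c \<in> PiE {1..d} (\<lambda>k. {0..r k}).
       W r c * (\<Sum>ls \<in> PiE {1..d} (\<lambda>k. compositions (r k) (c k)). int (q_nd n d (concat (map ls [1..<d+1])))))
     = (\<Sum>r \<in> PiE {1..d} (\<lambda>k. {0..<nk n d k}). \<Sum>c \<in> PiE {1..d} (\<lambda>k. {0..r k}).
       \<Sum>ls \<in> PiE {1..d} (\<lambda>k. compositions (r k) (c k)). W r c * int (q_nd n d (concat (map ls [1..<d+1]))))"
    by (simp add: sum_distrib_left)
  also have "\<dots> = (\<Sum>ls \<in> PiE {1..d} (\<lambda>k. Comp (nk n d k)).
      W (restrict (\<lambda>k. sum_list (ls k)) {1..d}) (restrict (\<lambda>k. length (ls k)) {1..d}) * int (q_nd n d (concat (map ls [1..<d+1]))))"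
    by (rule reindex_triple) simp
  also have "\<dots> = (\<Sum>ls\<in>PiE {1..d} (\<lambda>k. Comp (m k)). int (\<Prod>k\<in>{1..d}. (m k - sum_list (ls k)) choose length (ls k)) * HH ls)"
  proof (rule sum.cong)
    show "PiE {1..d} (\<lambda>k. Comp (nk n d k)) = PiE {1..d} (\<lambda>k. Comp (m k))" by (simp add: m_def)
    fix ls assume ls: "ls \<in> PiE {1..d} (\<lambda>k. Comp (m k))"
    define L where "L = concat (map ls [1..<d+1])"
    have s1: "(\<Sum>k=1..d. restrict (\<lambda>k. sum_list (ls k)) {1..d} k) = sum_list L"
    proof -
      have "(\<Sum>k=1..d. restrict (\<lambda>k. sum_list (ls k)) {1..d} k) = (\<Sum>k=1..d. sum_list (ls k))" by simp
      also have "\<dots> = sum_list (map (\<lambda>k. sum_list (ls k)) [1..<d+1])" by (rule sum_upt_list)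
      also have "\<dots> = sum_list L" unfolding L_def by (simp add: sum_list_concat' o_def)
      finally show ?thesis .
    qed
    have s2: "(\<Sum>k=1..d. restrict (\<lambda>k. length (ls k)) {1..d} k) = length L"
    proof -
      have "(\<Sum>k=1..d. restrict (\<lambda>k. length (ls k)) {1..d} k) = (\<Sum>k=1..d. length (ls k))" by simp
      also have "\<dots> = sum_list (map (\<lambda>k. length (ls k)) [1..<d+1])" by (rule sum_upt_list)
      also have "\<dots> = length L" unfolding L_def by (simp add: length_concat o_def)
      finally show ?thesis .
    qed
    have s3: "(\<Prod>k=1..d. int ((nk n d k - restrict (\<lambda>k. sum_list (ls k)) {1..d} k) choose restrict (\<lambda>k. length (ls k)) {1..d} k))
        = int (\<Prod>k\<in>{1..d}. (m k - sum_list (ls k)) choose length (ls k))"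
      by (simp add: m_def)
    show "W (restrict (\<lambda>k. sum_list (ls k)) {1..d}) (restrict (\<lambda>k. length (ls k)) {1..d}) * int (q_nd n d (concat (map ls [1..<d+1])))
        = int (\<Prod>k\<in>{1..d}. (m k - sum_list (ls k)) choose length (ls k)) * HH ls"
      unfolding W_def s1 s2 s3 HH_def Let_def L_def[symmetric]
      by (simp add: algebra_simps)
  qed
  also have "\<dots> = int (a_seq n d)" using IE step_b step_group by simp
  finally show ?thesis unfolding W_def by simp
qed

end

theorem mainTheorem2:
  fixes n d :: nat
  assumes "2 \<le> d" and "d < n"
  shows "int (a_seq n d) =
    (\<Sum>r \<in> PiE {1..d} (\<lambda>k. {0..<nk n d k}). \<Sum>c \<in> PiE {1..d} (\<lambda>k. {0..r k}).
       (-1) ^ (\<Sum>k=1..d. r k) * 2 ^ (\<Sum>k=1..d. c k)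
       * int (fact (n - (\<Sum>k=1..d. r k) - (\<Sum>k=1..d. c k)))
       * (\<Prod>k=1..d. int ((nk n d k - r k) choose c k))
       * (\<Sum>ls \<in> PiE {1..d} (\<lambda>k. compositions (r k) (c k)).
            int (q_nd n d (concat (map ls [1..<d+1])))))"
proof -
  interpret chn n d using assms by unfold_locales auto
  show ?thesis by (rule main_chn)
qed

end
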